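(* Let $1\le d<n$ and $r=d(n-d)$. Let $\sigma_{\max}:=\sigma_{\mathfrak C_{\mathrm{left}}}\in\mathsf S_r$ and let $[e,\sigma_{\max}]_R=\{\sigma\in\mathsf S_r\mid e\le_R\sigma\le_R\sigma_{\max}\}$. Then the map $C(d,n)\to[e,\sigma_{\max}]_R$, $\mathfrak C\mapsto\sigma_{\mathfrak C}$, is well defined and is a bijection between the set $C(d,n)$ of all maximal chains in $I(d,n)$ and the interval $[e,\sigma_{\max}]_R$. Moreover, for $1\le t\le r-1$ and $\mathfrak C\in C(d,n)$: if $E_t(\mathfrak C)\neq0$ then $\sigma_{E_t(\mathfrak C)}=\sigma_{\mathfrak C}s_t$, and if $F_t(\mathfrak C)\neq 0$ then $\sigma_{F_t(\mathfrak C)}=\sigma_{\mathfrak C}s_t$.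
   Context: $I(d,n)$ is the set of $d$-element subsets of $\{1,\dots,n\}$, written as increasing sequences $\underline i=i_1i_2\cdots i_d$ ($i_1<\dots<i_d$), partially ordered by $\underline i\le\underline j$ iff $i_k\le j_k$ for all $k$; the length is $\ell(\underline i)=\sum_h(i_h-h)$. $\underline i_{\min}=12\cdots d$, $\underline i_{\max}=(n-d+1)\cdots n$. A maximal chain is a totally ordered subset maximal under inclusion; every maximal chain has the form $\mathfrak C:\underline i_r>\underline i_{r-1}>\cdots>\underline i_0$ with $\ell(\underline i_t)=t$. $C(d,n)$ is the set of maximal chains. Rows are compared lexicographically ($\le_{lex}$), and chains are compared by comparing lexicographically the concatenated strings $\underline i_r\underline i_{r-1}\cdots\underline i_0$; $\mathfrak C_{\mathrm{right}}$ is the lexicographically smallest and $\mathfrak C_{\mathrm{left}}$ the lexicographically largest maximal chain. Root operators: for $1\le h\le d$ and $h\le s<n-d+h$, $f_{s,h}$ acts on $I(d,n)\sqcup\{0\}$ by $f_{s,h}(0)=0$ and $f_{s,h}(\underline i)$ = the row obtained by replacing $i_h=s$ by $s+1$ if $i_h=s$ and ($h=d$ or $i_{h+1}\ge s+2$), and $0$ otherwise. For a maximal chain $\underline i_r>\dots>\underline i_0$, each step satisfies $\underline i_t=f_{s_t,h_t}(\underline i_{t-1})$ for a unique pair, and each of the $r$ admissible pairs $(s,h)$ occurs exactly once. Writing $\tilde f_t:=f_{s_t,h_t}$ for the operators along $\mathfrak C_{\mathrm{right}}$, the permutation $\sigma_{\mathfrak C}\in\mathsf S_r$ of a maximal chain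 $\mathfrak C$ is defined by: the operator taking $\underline i_{t-1}$ to $\underline i_t$ in $\mathfrak C$ is $\tilde f_{\sigma_{\mathfrak C}(t)}$. Peaks and chain operators: for a maximal chain $\mathfrak C$ and $1\le t\le r-1$, the Bruhat interval $[\underline i_{t-1},\underline i_{t+1}]$ has 3 or 4 elements; if it has 4 elements $\{\underline i_{t-1},\underline i_t,\underline i'_t,\underline i_{t+1}\}$, $\underline i_t$ is a right peak if $\underline i'_t>_{lex}\underline i_t$ and a left peak if $\underline i_t>_{lex}\underline i'_t$. $F_t(\mathfrak C)$ is the chain obtained by replacing $\underline i_t$ by $\underline i'_t$ if $\underline i_t$ is a right peak, and $0$ otherwise; $E_t(\mathfrak C)$ is defined likewise with left peaks. $s_t=(t,t+1)\in\mathsf S_r$ are the simple transpositions, and $\le_R$ is the right weak Bruhat order: $u\le_R v$ iff some reduced word for $v$ has a reduced word for $u$ as initial substring. *)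

theory Defs
  imports "HOL-Combinatorics.Combinatorics"
begin

type_synonym row = "nat list"

text \<open>A row i_1 i_2 ... i_d is the list [i_1,...,i_d] (entry i_h is at list index h-1).\<close>

definition Irows :: "nat \<Rightarrow> nat \<Rightarrow> row set" where
  "Irows d n = {i. length i = d \<and> sorted_wrt (<) i \<and> set i \<subseteq> {1..n}}"

definition row_le :: "row \<Rightarrow> row \<Rightarrow> bool" where
  "row_le i j \<longleftrightarrow> length i = length j \<and> (\<forall>k<length i. i ! k \<le> j ! k)"

definition row_len :: "row \<Rightarrow> nat" where
  "row_len i = (\<Sum>k<length i. i ! k - (k + 1))"

definition lex_less :: "nat list \<Rightarrow> nat list \<Rightarrow> bool" where
  "lex_less xs ys \<longleftrightarrow> (xs, ys) \<in> lexord {(a, b). a < b}"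

definition is_chain :: "nat \<Rightarrow> nat \<Rightarrow> row set \<Rightarrow> bool" where
  "is_chain d n S \<longleftrightarrow> S \<subseteq> Irows d n \<and> (\<forall>x\<in>S. \<forall>y\<in>S. row_le x y \<or> row_le y x)"

definition is_max_chain :: "nat \<Rightarrow> nat \<Rightarrow> row set \<Rightarrow> bool" where
  "is_max_chain d n S \<longleftrightarrow> is_chain d n S \<and> (\<forall>T. is_chain d n T \<and> S \<subseteq> T \<longrightarrow> T = S)"

definition Cset :: "nat \<Rightarrow> nat \<Rightarrow> row set set" where
  "Cset d n = {S. is_max_chain d n S}"

text \<open>The element of length t of a maximal chain (i.e. the row i_t).\<close>
definition chain_elem :: "row set \<Rightarrow> nat \<Rightarrow> row" where
  "chain_elem S t = (THE x. x \<in> S \<and> row_len x = t)"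

definition chain_word :: "nat \<Rightarrow> nat \<Rightarrow> row set \<Rightarrow> nat list" where
  "chain_word d n S = concat (map (chain_elem S) (rev [0..<d * (n - d) + 1]))"

definition C_right :: "nat \<Rightarrow> nat \<Rightarrow> row set" where
  "C_right d n = (THE C. C \<in> Cset d n \<and>
      (\<forall>C'\<in>Cset d n. C' \<noteq> C \<longrightarrow> lex_less (chain_word d n C) (chain_word d n C')))"

definition C_left :: "nat \<Rightarrow> nat \<Rightarrow> row set" where
  "C_left d n = (THE C. C \<in> Cset d n \<and>
      (\<forall>C'\<in>Cset d n. C' \<noteq> C \<longrightarrow> lex_less (chain_word d n C') (chain_word d n C)))"

definition admissible :: "nat \<Rightarrow> nat \<Rightarrow> nat \<times> nat \<Rightarrow> bool" where
  "admissible d n p \<longleftrightarrow> (case p of (s, h) \<Rightarrow> 1 \<le> h \<and> h \<le> d \<and> h \<le> s \<and> s < n - d + h)"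

text \<open>f_{s,h}; None plays the role of 0.\<close>
definition root_op :: "nat \<Rightarrow> nat \<Rightarrow> row \<Rightarrow> row option" where
  "root_op s h i =
     (if 1 \<le> h \<and> h \<le> length i \<and> i ! (h - 1) = s \<and> (h = length i \<or> s + 2 \<le> i ! h)
      then Some (i[h - 1 := s + 1]) else None)"

definition step_pair :: "nat \<Rightarrow> nat \<Rightarrow> row set \<Rightarrow> nat \<Rightarrow> nat \<times> nat" where
  "step_pair d n S t = (THE p. admissible d n p \<and>
      root_op (fst p) (snd p) (chain_elem S (t - 1)) = Some (chain_elem S t))"

definition sigma :: "nat \<Rightarrow> nat \<Rightarrow> row set \<Rightarrow> nat \<Rightarrow> nat" where
  "sigma d n S t = (if t \<in> {1..d * (n - d)}
      then (THE u. u \<in> {1..d * (n - d)} \<and> step_pair d n (C_right d n) u = step_pair d n S t)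
      else t)"

definition bruhat_interval :: "nat \<Rightarrow> nat \<Rightarrow> row \<Rightarrow> row \<Rightarrow> row set" where
  "bruhat_interval d n a b = {x \<in> Irows d n. row_le a x \<and> row_le x b}"

definition other_mid :: "nat \<Rightarrow> nat \<Rightarrow> row set \<Rightarrow> nat \<Rightarrow> row" where
  "other_mid d n S t = (THE x. x \<in> bruhat_interval d n (chain_elem S (t - 1)) (chain_elem S (t + 1))
       - {chain_elem S (t - 1), chain_elem S t, chain_elem S (t + 1)})"

definition four_elem :: "nat \<Rightarrow> nat \<Rightarrow> row set \<Rightarrow> nat \<Rightarrow> bool" where
  "four_elem d n S t \<longleftrightarrow> card (bruhat_interval d n (chain_elem S (t - 1)) (chain_elem S (t + 1))) = 4"

definition right_peak :: "nat \<Rightarrow> nat \<Rightarrow> row set \<Rightarrow> nat \<Rightarrow> bool" where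
  "right_peak d n S t \<longleftrightarrow> four_elem d n S t \<and> lex_less (chain_elem S t) (other_mid d n S t)"

definition left_peak :: "nat \<Rightarrow> nat \<Rightarrow> row set \<Rightarrow> nat \<Rightarrow> bool" where
  "left_peak d n S t \<longleftrightarrow> four_elem d n S t \<and> lex_less (other_mid d n S t) (chain_elem S t)"

text \<open>F_t and E_t; None plays the role of 0.\<close>
definition F_op :: "nat \<Rightarrow> nat \<Rightarrow> nat \<Rightarrow> row set \<Rightarrow> row set option" where
  "F_op d n t S = (if right_peak d n S t
      then Some (insert (other_mid d n S t) (S - {chain_elem S t})) else None)"

definition E_op :: "nat \<Rightarrow> nat \<Rightarrow> nat \<Rightarrow> row set \<Rightarrow> row set option" where
  "E_op d n t S = (if left_peak d n S t
      then Some (insert (other_mid d n S t) (S - {chain_elem S t})) else None)"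

definition word_prod :: "nat list \<Rightarrow> nat \<Rightarrow> nat" where
  "word_prod w = foldr (\<lambda>a f. Transposition.transpose a (Suc a) \<circ> f) w id"

definition is_word :: "nat \<Rightarrow> nat list \<Rightarrow> bool" where
  "is_word r w \<longleftrightarrow> set w \<subseteq> {1..<r}"

definition reduced :: "nat \<Rightarrow> nat list \<Rightarrow> bool" where
  "reduced r w \<longleftrightarrow> is_word r w \<and>
     (\<forall>w'. is_word r w' \<and> word_prod w' = word_prod w \<longrightarrow> length w \<le> length w')"

definition weak_le :: "nat \<Rightarrow> (nat \<Rightarrow> nat) \<Rightarrow> (nat \<Rightarrow> nat) \<Rightarrow> bool" where
  "weak_le r u v \<longleftrightarrow> (\<exists>w k. reduced r w \<and> word_prod w = v \<and> k \<le> length w \<and>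
       reduced r (take k w) \<and> word_prod (take k w) = u)"

end

theory Submission
  imports Defs
begin


lemma Irows_iff:
  "x \<in> Irows d n \<longleftrightarrow> length x = d \<and> (\<forall>i. Suc i < d \<longrightarrow> x!i < x!Suc i) \<and> (\<forall>i<d. 1 \<le> x!i \<and> x!i \<le> n)"
proof -
  have "sorted_wrt (<) x \<longleftrightarrow> (\<forall>i. Suc i < length x \<longrightarrow> x!i < x!Suc i)"
    by (rule sorted_wrt_iff_nth_Suc_transp) (simp add: transp_def)
  moreover have "set x \<subseteq> {1..n} \<longleftrightarrow> (\<forall>i<length x. 1 \<le> x!i \<and> x!i \<le> n)"
    by (auto simp: set_conv_nth)
  ultimately show ?thesis unfolding Irows_def by auto
qed

lemma Irows_gap:
  assumes "x \<in> Irows d n" "i \<le> j" "j < d"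
  shows "x!i + (j - i) \<le> x!j"
  using assms(2,3)
proof (induction j)
  case 0 then show ?case by simp
next
  case (Suc j)
  show ?case
  proof (cases "i = Suc j")
    case True then show ?thesis by simp
  next
    case False
    then have "i \<le> j" using Suc by simp
    then have "x!i + (j - i) \<le> x!j" using Suc by simp
    moreover have "x!j < x!Suc j" using assms(1) Suc(3) by (simp add: Irows_iff)
    ultimately show ?thesis using \<open>i \<le> j\<close> by simp
  qed
qed

lemma Irows_bounds:
  assumes "x \<in> Irows d n" "k < d"
  shows "Suc k \<le> x!k" "x!k + d \<le> n + Suc k"
proof -
  have "x!0 + (k - 0) \<le> x!k" using Irows_gap[OF assms(1), of 0 k] assms by simp
  moreover have "1 \<le> x!0" using assms by (auto simp: Irows_iff)
  ultimately show "Suc k \<le> x!k" by simp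
  have "x!k + (d - 1 - k) \<le> x!(d-1)" using Irows_gap[OF assms(1), of k "d-1"] assms by simp
  moreover have "x!(d-1) \<le> n" using assms by (auto simp: Irows_iff)
  ultimately show "x!k + d \<le> n + Suc k" using assms(2) by simp
qed

lemma Irows_length: "x \<in> Irows d n \<Longrightarrow> length x = d"
  by (simp add: Irows_def)

lemma root_op_Some:
  "root_op s h x = Some y \<longleftrightarrow> 1 \<le> h \<and> h \<le> length x \<and> x!(h-1) = s \<and> (h = length x \<or> s + 2 \<le> x!h) \<and> y = x[h-1 := s+1]"
  unfolding root_op_def by auto

lemma row_le_refl: "row_le x x" by (simp add: row_le_def)

lemma row_le_trans: "row_le x y \<Longrightarrow> row_le y z \<Longrightarrow> row_le x z"
  unfolding row_le_def by (metis order_trans)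

lemma row_len_mono:
  assumes "row_le x y" shows "row_len x \<le> row_len y"
  using assms unfolding row_le_def row_len_def
  by (auto intro!: sum_mono diff_le_mono)

lemma row_le_less:
  assumes "x \<in> Irows d n" "y \<in> Irows d n" "row_le x y" "x \<noteq> y"
  shows "row_len x < row_len y"
proof -
  have lx: "length x = d" "length y = d" using assms by (auto simp: Irows_def)
  obtain k where k: "k < d" "x!k \<noteq> y!k" using assms(4) lx by (metis nth_equalityI)
  then have "x!k < y!k" using assms(3) lx by (auto simp: row_le_def le_less)
  moreover have "Suc k \<le> x!k" using Irows_bounds[OF assms(1) k(1)] by simp
  ultimately have "x!k - (k+1) < y!k - (k+1)" by simp
  then have "(\<Sum>k<d. x ! k - (k + 1)) < (\<Sum>k<d. y ! k - (k + 1))"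
    using assms(3) lx k(1)
    by (intro sum_strict_mono_ex1) (auto simp: row_le_def intro!: diff_le_mono)
  then show ?thesis using lx by (simp add: row_len_def)
qed

lemma row_le_len_eq:
  assumes "x \<in> Irows d n" "y \<in> Irows d n" "row_le x y" "row_len x = row_len y"
  shows "x = y"
  using row_le_less[OF assms(1-3)] assms(4) by auto

lemma root_op_props:
  assumes "x \<in> Irows d n" "root_op s h x = Some y"
  shows "row_le x y" "length y = d" "row_len y = Suc (row_len x)" "y \<noteq> x"
    "1 \<le> h" "h \<le> d" "x!(h-1) = s" "y = x[h-1 := s+1]" "h < d \<Longrightarrow> s + 2 \<le> x!h"
proof -
  have lx: "length x = d" using assms by (simp add: Irows_def)
  have R: "1 \<le> h" "h \<le> d" "x!(h-1) = s" "h = d \<or> s + 2 \<le> x!h" "y = x[h-1 := s+1]"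
    using assms(2) lx by (auto simp: root_op_Some)
  then show "1 \<le> h" "h \<le> d" "x!(h-1) = s" "y = x[h-1 := s+1]" "h < d \<Longrightarrow> s + 2 \<le> x!h" by auto
  show "length y = d" using R lx by simp
  show "row_le x y" using R lx by (auto simp: row_le_def nth_list_update)
  have "y!(h-1) = s+1" using R lx by simp
  then show "y \<noteq> x" using R(3) by auto
  have hd: "h - 1 < d" using R by simp
  have sb: "Suc (h-1) \<le> s" using Irows_bounds(1)[OF assms(1) hd] R by simp
  have "row_len y = (\<Sum>k<d. y ! k - (k + 1))" using R lx by (simp add: row_len_def)
  also have "\<dots> = (y!(h-1) - h) + (\<Sum>k\<in>{..<d} - {h-1}. y ! k - (k + 1))"
    using hd R(1) by (subst sum.remove[of _ "h-1"]) auto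
  also have "\<dots> = Suc (x!(h-1) - h) + (\<Sum>k\<in>{..<d} - {h-1}. x ! k - (k + 1))"
  proof -
    have e: "\<And>k. k \<in> {..<d} - {h-1} \<Longrightarrow> y!k = x!k" using R(5) by simp
    have "y!(h-1) = s + 1" using R(5) hd lx by simp
    then have "y!(h-1) - h = Suc (x!(h-1) - h)" using sb R(3) by simp
    moreover have "(\<Sum>k\<in>{..<d} - {h-1}. y ! k - (k + 1)) = (\<Sum>k\<in>{..<d} - {h-1}. x ! k - (k + 1))"
      by (intro sum.cong refl) (simp add: e)
    ultimately show ?thesis by simp
  qed
  also have "\<dots> = Suc (\<Sum>k<d. x ! k - (k + 1))"
    using hd R(1) by (subst (2) sum.remove[of _ "h-1"]) auto
  finally show "row_len y = Suc (row_len x)" using lx by (simp add: row_len_def)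
qed

lemma root_op_Irows:
  assumes "x \<in> Irows d n" "root_op s h x = Some y" "s + 1 \<le> n"
  shows "y \<in> Irows d n"
proof -
  note P = root_op_props[OF assms(1,2)]
  have lx: "length x = d" using assms by (simp add: Irows_def)
  have X: "\<forall>i. Suc i < d \<longrightarrow> x!i < x!Suc i" "\<forall>i<d. 1 \<le> x!i \<and> x!i \<le> n"
    using assms(1) by (auto simp: Irows_iff)
  show ?thesis unfolding Irows_iff
  proof (intro conjI allI impI)
    show "length y = d" by (rule P(2))
  next
    fix i assume i: "Suc i < d"
    show "y!i < y!Suc i"
      using X(1) i P(5-9) lx by (auto simp: nth_list_update)
  next
    fix i assume "i < d"
    then show "1 \<le> y!i" "y!i \<le> n" using X(2) P(5-8) lx assms(3) by (auto simp: nth_list_update)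
  qed
qed

definition rmin :: "nat \<Rightarrow> row" where "rmin d = map Suc [0..<d]"
definition rmax :: "nat \<Rightarrow> nat \<Rightarrow> row" where "rmax d n = map (\<lambda>k. n - d + Suc k) [0..<d]"

lemma rmin_Irows: "d \<le> n \<Longrightarrow> rmin d \<in> Irows d n"
  by (auto simp: Irows_iff rmin_def)

lemma rmax_Irows: "d \<le> n \<Longrightarrow> rmax d n \<in> Irows d n"
  by (auto simp: Irows_iff rmax_def)

lemma rmin_le: "x \<in> Irows d n \<Longrightarrow> row_le (rmin d) x"
  using Irows_bounds(1) by (auto simp: row_le_def rmin_def Irows_length)

lemma le_rmax: assumes "x \<in> Irows d n" shows "row_le x (rmax d n)"
  unfolding row_le_def
proof (intro conjI allI impI)
  show "length x = length (rmax d n)" using assms by (simp add: rmax_def Irows_length)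
  fix k assume "k < length x"
  then have k: "k < d" using assms by (simp add: Irows_length)
  have "x!k + d \<le> n + Suc k" using Irows_bounds(2)[OF assms k] .
  then show "x!k \<le> rmax d n ! k" using k by (simp add: rmax_def)
qed

lemma row_len_rmin: "row_len (rmin d) = 0"
  by (simp add: row_len_def rmin_def)

lemma row_len_rmax: "row_len (rmax d n) = d * (n - d)"
proof -
  have "row_len (rmax d n) = (\<Sum>k<d. n - d)" unfolding row_len_def rmax_def
    by (intro sum.cong) auto
  then show ?thesis by simp
qed

lemma row_len_le: "x \<in> Irows d n \<Longrightarrow> row_len x \<le> d * (n - d)"
  using row_len_mono[OF le_rmax] row_len_rmax by metis

lemma cover:
  assumes "x \<in> Irows d n" "y \<in> Irows d n" "row_le x y" "x \<noteq> y"
  shows "\<exists>s h c. root_op s h x = Some c \<and> c \<in> Irows d n \<and> row_le c y \<and> s + 1 \<le> n"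
proof -
  have lx: "length x = d" "length y = d" using assms by (auto simp: Irows_def)
  let ?K = "{i. i < d \<and> x!i < y!i}"
  have ne: "?K \<noteq> {}"
  proof
    assume K0: "?K = {}"
    have "\<forall>i<d. x!i = y!i"
    proof (intro allI impI)
      fix i assume i: "i < d"
      then have "x!i \<le> y!i" using assms(3) lx by (simp add: row_le_def)
      moreover have "\<not> x!i < y!i" using K0 i by blast
      ultimately show "x!i = y!i" by simp
    qed
    then have "x = y" using lx by (intro nth_equalityI) auto
    then show False using assms(4) by simp
  qed
  have "?K \<subseteq> {..<d}" by auto
  then have fin: "finite ?K" by (rule finite_subset) simp
  have iK: "Max ?K \<in> ?K" by (rule Max_in[OF fin ne])
  have imax: "\<And>j. j \<in> ?K \<Longrightarrow> j \<le> Max ?K" by (rule Max_ge[OF fin])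
  define i where "i = Max ?K"
  have i: "i < d" "x!i < y!i" using iK i_def by auto
  have above: "\<And>j. i < j \<Longrightarrow> j < d \<Longrightarrow> x!j = y!j"
  proof -
    fix j assume "i < j" "j < d"
    then have "j \<notin> ?K" using imax i_def by (meson leD)
    then have "\<not> x!j < y!j" using \<open>j < d\<close> by simp
    moreover have "x!j \<le> y!j" using assms(3) \<open>j < d\<close> lx by (simp add: row_le_def)
    ultimately show "x!j = y!j" by simp
  qed
  define c where "c = x[i := x!i + 1]"
  have Y: "\<forall>i. Suc i < d \<longrightarrow> y!i < y!Suc i" "\<forall>i<d. 1 \<le> y!i \<and> y!i \<le> n"
    using assms(2) by (auto simp: Irows_iff)
  have cond: "Suc i = d \<or> x!i + 2 \<le> x!Suc i"
  proof (cases "Suc i < d")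
    case True
    then have "x!Suc i = y!Suc i" using above by simp
    moreover have "y!i < y!Suc i" using Y(1) True by simp
    ultimately show ?thesis using i(2) by simp
  qed (use i(1) in simp)
  have R: "root_op (x!i) (Suc i) x = Some c"
    unfolding root_op_Some using lx i cond by (simp add: c_def)
  have "y!i \<le> n" using Y(2) i(1) by simp
  then have sn: "x!i + 1 \<le> n" using i(2) by simp
  have "c \<in> Irows d n" using root_op_Irows[OF assms(1) R sn] .
  moreover have "row_le c y" unfolding row_le_def
  proof (intro conjI allI impI)
    show "length c = length y" using lx by (simp add: c_def)
    fix k assume "k < length c"
    then have k: "k < d" using lx by (simp add: c_def)
    show "c!k \<le> y!k"
    proof (cases "k = i")
      case True then show ?thesis using i lx by (simp add: c_def)
    next
      case False then show ?thesis using assms(3) k lx by (simp add: c_def row_le_def)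
    qed
  qed
  ultimately show ?thesis using R sn by blast
qed




definition valid_rows :: "nat \<Rightarrow> nat \<Rightarrow> (nat \<Rightarrow> row) \<Rightarrow> bool" where
  "valid_rows d n x \<longleftrightarrow> x 0 = rmin d \<and> (\<forall>t \<le> d * (n - d). x t \<in> Irows d n) \<and>
     (\<forall>t < d * (n - d). \<exists>s h. root_op s h (x t) = Some (x (Suc t)))"

lemma vr_len:
  assumes "valid_rows d n x" "t \<le> d * (n - d)"
  shows "row_len (x t) = t"
  using assms(2)
proof (induction t)
  case 0 then show ?case using assms(1) by (simp add: valid_rows_def row_len_rmin)
next
  case (Suc t)
  then have "x t \<in> Irows d n" "\<exists>s h. root_op s h (x t) = Some (x (Suc t))"
    using assms(1) by (auto simp: valid_rows_def)
  then show ?case using Suc root_op_props(3) by fastforce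
qed

lemma vr_mono:
  assumes "valid_rows d n x" "a \<le> b" "b \<le> d * (n - d)"
  shows "row_le (x a) (x b)"
  using assms(2,3)
proof (induction b)
  case 0 then show ?case by (simp add: row_le_refl)
next
  case (Suc b)
  show ?case
  proof (cases "a = Suc b")
    case True then show ?thesis by (simp add: row_le_refl)
  next
    case False
    then have "row_le (x a) (x b)" using Suc by simp
    moreover have "x b \<in> Irows d n" "\<exists>s h. root_op s h (x b) = Some (x (Suc b))"
      using assms(1) Suc(3) by (auto simp: valid_rows_def)
    then have "row_le (x b) (x (Suc b))" using root_op_props(1) by blast
    ultimately show ?thesis using row_le_trans by blast
  qed
qed

lemma chain_of_valid:
  assumes "valid_rows d n x"
  shows "x ` {0..d * (n - d)} \<in> Cset d n"
    "\<And>t. t \<le> d * (n - d) \<Longrightarrow> chain_elem (x ` {0..d * (n - d)}) t = x t"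
proof -
  let ?r = "d * (n - d)"
  let ?S = "x ` {0..?r}"
  have I: "\<And>t. t \<le> ?r \<Longrightarrow> x t \<in> Irows d n" using assms by (simp add: valid_rows_def)
  have L: "\<And>t. t \<le> ?r \<Longrightarrow> row_len (x t) = t" using vr_len[OF assms] .
  have ch: "is_chain d n ?S"
    unfolding is_chain_def
  proof (intro conjI ballI)
    show "?S \<subseteq> Irows d n" using I by auto
  next
    fix y z assume "y \<in> ?S" "z \<in> ?S"
    then obtain a b where "y = x a" "z = x b" "a \<le> ?r" "b \<le> ?r" by auto
    then show "row_le y z \<or> row_le z y"
      using vr_mono[OF assms] by (cases "a \<le> b") auto
  qed
  show "?S \<in> Cset d n"
    unfolding Cset_def is_max_chain_def
  proof (intro CollectI conjI allI impI ch)
    fix T assume T: "is_chain d n T \<and> ?S \<subseteq> T"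
    show "T = ?S"
    proof
      show "?S \<subseteq> T" using T by simp
      show "T \<subseteq> ?S"
      proof
        fix y assume y: "y \<in> T"
        then have yI: "y \<in> Irows d n" using T by (auto simp: is_chain_def)
        define l where "l = row_len y"
        have l: "l \<le> ?r" using row_len_le[OF yI] l_def by simp
        have "x l \<in> T" using T l by auto
        then have "row_le y (x l) \<or> row_le (x l) y" using T y by (auto simp: is_chain_def)
        moreover have "row_len (x l) = row_len y" using L[OF l] l_def by simp
        ultimately have "y = x l" using row_le_len_eq yI I[OF l] by metis
        then show "y \<in> ?S" using l by auto
      qed
    qed
  qed
  fix t assume t: "t \<le> ?r"
  show "chain_elem ?S t = x t"
    unfolding chain_elem_def
  proof (rule the_equality)
    show "x t \<in> ?S \<and> row_len (x t) = t" using t L by auto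
  next
    fix z assume "z \<in> ?S \<and> row_len z = t"
    then obtain u where "z = x u" "u \<le> ?r" "row_len z = t" by auto
    then show "z = x t" using L by auto
  qed
qed

lemma valid_of_chain:
  assumes dn: "d \<le> n" and S: "S \<in> Cset d n"
  shows "valid_rows d n (chain_elem S)" "S = chain_elem S ` {0..d * (n - d)}"
    "\<And>t. t \<le> d * (n - d) \<Longrightarrow> chain_elem S t \<in> S \<and> row_len (chain_elem S t) = t"
proof -
  let ?r = "d * (n - d)"
  have SI: "S \<subseteq> Irows d n" and cmp: "\<And>y z. y \<in> S \<Longrightarrow> z \<in> S \<Longrightarrow> row_le y z \<or> row_le z y"
    using S by (auto simp: Cset_def is_max_chain_def is_chain_def)
  have maxi: "\<And>c. c \<in> Irows d n \<Longrightarrow> (\<And>y. y \<in> S \<Longrightarrow> row_le y c \<or> row_le c y) \<Longrightarrow> c \<in> S"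
  proof -
    fix c assume c: "c \<in> Irows d n" "\<And>y. y \<in> S \<Longrightarrow> row_le y c \<or> row_le c y"
    have "is_chain d n (insert c S)"
      unfolding is_chain_def using SI c cmp by (auto simp: row_le_refl)
    then have "insert c S = S" using S by (auto simp: Cset_def is_max_chain_def)
    then show "c \<in> S" by auto
  qed
  have uniq: "\<And>y z. y \<in> S \<Longrightarrow> z \<in> S \<Longrightarrow> row_len y = row_len z \<Longrightarrow> y = z"
  proof -
    fix y z assume "y \<in> S" "z \<in> S" "row_len y = row_len z"
    then show "y = z" using cmp SI row_le_len_eq by (metis subsetD)
  qed
  have minS: "rmin d \<in> S"
    using maxi rmin_Irows[OF dn] rmin_le SI by blast
  have maxS: "rmax d n \<in> S"
    using maxi rmax_Irows[OF dn] le_rmax SI by blast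
  have ex: "\<And>t. t \<le> ?r \<Longrightarrow> \<exists>y\<in>S. row_len y = t"
  proof -
    fix t assume "t \<le> ?r"
    then show "\<exists>y\<in>S. row_len y = t"
    proof (induction t)
      case 0 then show ?case using minS row_len_rmin by blast
    next
      case (Suc t)
      then obtain a where a: "a \<in> S" "row_len a = t" by auto
      have aI: "a \<in> Irows d n" using a SI by auto
      define M where "M = {l. t < l \<and> (\<exists>y\<in>S. row_len y = l)}"
      have "?r \<in> M" using maxS row_len_rmax Suc(2) M_def by auto
      then have m0: "Least (\<lambda>l. l \<in> M) \<in> M" by (rule LeastI)
      have m0le: "\<And>l. l \<in> M \<Longrightarrow> Least (\<lambda>l. l \<in> M) \<le> l" by (rule Least_le)
      obtain b where b: "b \<in> S" "row_len b = Least (\<lambda>l. l \<in> M)" "t < row_len b"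
        using m0 M_def by auto
      have bI: "b \<in> Irows d n" using b SI by auto
      have ab: "row_le a b"
      proof -
        have "row_le a b \<or> row_le b a" using cmp a b by blast
        moreover have "\<not> row_le b a" using row_len_mono b a by (metis leD)
        ultimately show ?thesis by blast
      qed
      have "a \<noteq> b" using a b by auto
      then obtain s h c where c: "root_op s h a = Some c" "c \<in> Irows d n" "row_le c b"
        using cover[OF aI bI ab] by blast
      have lc: "row_len c = Suc t" using root_op_props(3)[OF aI c(1)] a by simp
      have "c \<in> S"
      proof (rule maxi[OF c(2)])
        fix y assume y: "y \<in> S"
        show "row_le y c \<or> row_le c y"
        proof (cases "row_len y \<le> t")
          case True
          have "row_le y a"
          proof -
            have "row_le y a \<or> row_le a y" using cmp a y by blast
            moreover have "row_le a y \<Longrightarrow> a = y"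
              using row_le_len_eq[OF aI] SI y row_len_mono True a by (metis le_antisym subsetD)
            ultimately show ?thesis using row_le_refl by blast
          qed
          then show ?thesis using root_op_props(1)[OF aI c(1)] row_le_trans by blast
        next
          case False
          then have "row_len y \<in> M" using M_def y by auto
          then have yb: "row_len b \<le> row_len y" using m0le b by simp
          have "row_le b y"
          proof -
            have "row_le y b \<or> row_le b y" using cmp b y by blast
            moreover have "row_le y b \<Longrightarrow> y = b"
              using row_le_len_eq[OF _ bI] SI y row_len_mono yb by (metis le_antisym subsetD)
            ultimately show ?thesis using row_le_refl by blast
          qed
          then show ?thesis using c(3) row_le_trans by blast
        qed
      qed
      then show ?case using lc by blast
    qed
  qed
  have ce: "\<And>t. t \<le> ?r \<Longrightarrow> chain_elem S t \<in> S \<and> row_len (chain_elem S t) = t"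
  proof -
    fix t assume "t \<le> ?r"
    then obtain y where y: "y \<in> S" "row_len y = t" using ex by blast
    have "chain_elem S t = y"
      unfolding chain_elem_def
      by (rule the_equality) (use y uniq in auto)
    then show "chain_elem S t \<in> S \<and> row_len (chain_elem S t) = t" using y by simp
  qed
  then show "\<And>t. t \<le> ?r \<Longrightarrow> chain_elem S t \<in> S \<and> row_len (chain_elem S t) = t" .
  show "S = chain_elem S ` {0..?r}"
  proof
    show "chain_elem S ` {0..?r} \<subseteq> S" using ce by auto
    show "S \<subseteq> chain_elem S ` {0..?r}"
    proof
      fix y assume y: "y \<in> S"
      define l where "l = row_len y"
      have l: "l \<le> ?r" using row_len_le y SI l_def by auto
      have "chain_elem S l = y" using ce[OF l] uniq y l_def by auto
      then show "y \<in> chain_elem S ` {0..?r}" using l by force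
    qed
  qed
  show "valid_rows d n (chain_elem S)"
    unfolding valid_rows_def
  proof (intro conjI allI impI)
    show "chain_elem S 0 = rmin d" using ce[of 0] uniq minS row_len_rmin by auto
  next
    fix t assume "t \<le> ?r" then show "chain_elem S t \<in> Irows d n" using ce SI by auto
  next
    fix t assume t: "t < ?r"
    let ?a = "chain_elem S t" and ?b = "chain_elem S (Suc t)"
    have a: "?a \<in> S" "row_len ?a = t" using ce t by auto
    have b: "?b \<in> S" "row_len ?b = Suc t" using ce t by auto
    have aI: "?a \<in> Irows d n" and bI: "?b \<in> Irows d n" using a b SI by auto
    have ab: "row_le ?a ?b"
    proof -
      have "row_le ?a ?b \<or> row_le ?b ?a" using cmp a b by blast
      moreover have "\<not> row_le ?b ?a" using row_len_mono a b by (metis Suc_n_not_le_n)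
      ultimately show ?thesis by blast
    qed
    have "?a \<noteq> ?b" using a b by auto
    then obtain s h c where c: "root_op s h ?a = Some c" "c \<in> Irows d n" "row_le c ?b"
      using cover[OF aI bI ab] by blast
    have "row_len c = Suc t" using root_op_props(3)[OF aI c(1)] a by simp
    then have "c = ?b" using row_le_len_eq[OF c(2) bI c(3)] b by simp
    then show "\<exists>s h. root_op s h ?a = Some ?b" using c by blast
  qed
qed




definition Adm :: "nat \<Rightarrow> nat \<Rightarrow> (nat \<times> nat) set" where
  "Adm d n = {p. admissible d n p}"

lemma Adm_iff: "(s, h) \<in> Adm d n \<longleftrightarrow> 1 \<le> h \<and> h \<le> d \<and> h \<le> s \<and> s < n - d + h"
  by (simp add: Adm_def admissible_def)

lemma card_Adm: "card (Adm d n) = d * (n - d)"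
proof -
  let ?f = "\<lambda>(i::nat, j::nat). (i + 1 + j, i + 1)"
  have inj: "inj_on ?f ({..<d} \<times> {..<n - d})" by (auto simp: inj_on_def)
  have im: "?f ` ({..<d} \<times> {..<n - d}) = Adm d n"
  proof
    show "?f ` ({..<d} \<times> {..<n - d}) \<subseteq> Adm d n" by (auto simp: Adm_iff)
    show "Adm d n \<subseteq> ?f ` ({..<d} \<times> {..<n - d})"
    proof
      fix p assume "p \<in> Adm d n"
      then obtain s h where p: "p = (s, h)" "1 \<le> h" "h \<le> d" "h \<le> s" "s < n - d + h"
        by (cases p) (auto simp: Adm_iff)
      then have "(h - 1, s - h) \<in> {..<d} \<times> {..<n - d}" "?f (h - 1, s - h) = p" by auto
      then show "p \<in> ?f ` ({..<d} \<times> {..<n - d})" by force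
    qed
  qed
  have "card (Adm d n) = card ({..<d} \<times> {..<n - d})" using card_image[OF inj] im by simp
  then show ?thesis by (simp add: card_cartesian_product)
qed

lemma finite_Adm: "finite (Adm d n)"
proof -
  have "Adm d n \<subseteq> {..n} \<times> {..d}" by (auto simp: Adm_def admissible_def)
  then show ?thesis by (rule finite_subset) simp
qed

lemma root_op_unique:
  assumes "x \<in> Irows d n" "root_op s h x = Some y" "root_op s' h' x = Some y"
  shows "s = s' \<and> h = h'"
proof -
  note A = root_op_props[OF assms(1,2)] and B = root_op_props[OF assms(1,3)]
  have lx: "length x = d" using assms(1) by (simp add: Irows_length)
  have hh: "h = h'"
  proof (rule ccontr)
    assume "h \<noteq> h'"
    then have "h - 1 \<noteq> h' - 1" using A(5) B(5) by simp
    then have "y!(h-1) = x!(h-1)" using B(8) by simp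
    moreover have "y!(h-1) = s + 1" using A(5,6,8) lx by simp
    ultimately show False using A(7) by simp
  qed
  then show ?thesis using A(7) B(7) by simp
qed

lemma root_op_det:
  "root_op s h x = Some y \<Longrightarrow> root_op s h x = Some z \<Longrightarrow> y = z" by simp

lemma step_pair_spec:
  assumes dn: "d \<le> n" and S: "S \<in> Cset d n" and t: "1 \<le> t" "t \<le> d * (n - d)"
  shows "step_pair d n S t \<in> Adm d n"
    "root_op (fst (step_pair d n S t)) (snd (step_pair d n S t)) (chain_elem S (t - 1)) = Some (chain_elem S t)"
proof -
  let ?x = "chain_elem S"
  have V: "valid_rows d n ?x" using valid_of_chain[OF dn S] by simp
  have I1: "?x (t - 1) \<in> Irows d n" and I2: "?x t \<in> Irows d n" using V t by (auto simp: valid_rows_def)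
  have "t - 1 < d * (n - d)" using t by simp
  then have "\<exists>s h. root_op s h (?x (t - 1)) = Some (?x (Suc (t - 1)))"
    using V unfolding valid_rows_def by blast
  moreover have "Suc (t - 1) = t" using t by simp
  ultimately obtain s h where sh: "root_op s h (?x (t - 1)) = Some (?x t)" by auto
  note P = root_op_props[OF I1 sh]
  have hs: "h \<le> s" using Irows_bounds(1)[OF I1, of "h-1"] P(5,6,7) by simp
  have "?x t ! (h - 1) + d \<le> n + h" using Irows_bounds(2)[OF I2, of "h-1"] P(5,6) by simp
  moreover have "?x t ! (h - 1) = s + 1" using P(5,6,8) I1 by (simp add: Irows_length)
  ultimately have "s < n - d + h" by simp
  then have adm: "admissible d n (s, h)" using P(5,6) hs by (simp add: admissible_def)
  have "step_pair d n S t = (s, h)"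
    unfolding step_pair_def
  proof (rule the_equality)
    show "admissible d n (s, h) \<and> root_op (fst (s, h)) (snd (s, h)) (?x (t - 1)) = Some (?x t)"
      using adm sh by simp
  next
    fix p assume "admissible d n p \<and> root_op (fst p) (snd p) (?x (t - 1)) = Some (?x t)"
    then show "p = (s, h)" using root_op_unique[OF I1 sh] by (cases p) force
  qed
  then show "step_pair d n S t \<in> Adm d n"
    "root_op (fst (step_pair d n S t)) (snd (step_pair d n S t)) (chain_elem S (t - 1)) = Some (chain_elem S t)"
    using adm sh by (auto simp: Adm_def)
qed

lemma chain_mono:
  assumes dn: "d \<le> n" and S: "S \<in> Cset d n" and "a \<le> b" "b \<le> d * (n - d)"
  shows "row_le (chain_elem S a) (chain_elem S b)"
  using vr_mono[OF valid_of_chain(1)[OF dn S]] assms(3,4) .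

lemma chain_Irows:
  assumes dn: "d \<le> n" and S: "S \<in> Cset d n" and "t \<le> d * (n - d)"
  shows "chain_elem S t \<in> Irows d n"
  using valid_of_chain(1)[OF dn S] assms(3) by (simp add: valid_rows_def)

lemma step_facts:
  assumes dn: "d \<le> n" and S: "S \<in> Cset d n" and t: "1 \<le> t" "t \<le> d * (n - d)"
    and p: "step_pair d n S t = (s, h)"
  shows "chain_elem S (t - 1) ! (h - 1) = s" "chain_elem S t ! (h - 1) = s + 1"
    "h < d \<Longrightarrow> s + 2 \<le> chain_elem S (t - 1) ! h" "1 \<le> h" "h \<le> d"
    "chain_elem S t = (chain_elem S (t - 1))[h - 1 := s + 1]"
proof -
  have I1: "chain_elem S (t - 1) \<in> Irows d n" using chain_Irows[OF dn S] t by simp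
  have R: "root_op s h (chain_elem S (t - 1)) = Some (chain_elem S t)"
    using step_pair_spec(2)[OF dn S t] p by simp
  note P = root_op_props[OF I1 R]
  show "chain_elem S (t - 1) ! (h - 1) = s" "h < d \<Longrightarrow> s + 2 \<le> chain_elem S (t - 1) ! h"
    "1 \<le> h" "h \<le> d" "chain_elem S t = (chain_elem S (t - 1))[h - 1 := s + 1]" using P by auto
  then show "chain_elem S t ! (h - 1) = s + 1" using I1 by (simp add: Irows_length)
qed

lemma step_inj:
  assumes dn: "d \<le> n" and S: "S \<in> Cset d n"
  shows "inj_on (step_pair d n S) {1..d * (n - d)}"
proof -
  have *: "False" if t: "1 \<le> t" "t < t'" "t' \<le> d * (n - d)" and eq: "step_pair d n S t = step_pair d n S t'" for t t'
  proof -
    obtain s h where p: "step_pair d n S t = (s, h)" by (cases "step_pair d n S t")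
    have p': "step_pair d n S t' = (s, h)" using p eq by simp
    have a: "chain_elem S t ! (h - 1) = s + 1" using step_facts(2)[OF dn S _ _ p] t by simp
    have b: "chain_elem S (t' - 1) ! (h - 1) = s" using step_facts(1)[OF dn S _ _ p'] t by simp
    have hd: "h - 1 < d" using step_facts(4,5)[OF dn S _ _ p] t by simp
    have "row_le (chain_elem S t) (chain_elem S (t' - 1))" using chain_mono[OF dn S] t by simp
    then have "chain_elem S t ! (h - 1) \<le> chain_elem S (t' - 1) ! (h - 1)"
      using hd chain_Irows[OF dn S, of t] t by (simp add: row_le_def Irows_length)
    then show False using a b by simp
  qed
  show ?thesis unfolding inj_on_def
  proof (intro ballI impI)
    fix t t' assume "t \<in> {1..d * (n - d)}" "t' \<in> {1..d * (n - d)}" "step_pair d n S t = step_pair d n S t'"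
    then show "t = t'"
    proof (cases t t' rule: linorder_cases)
      case less then show ?thesis using * \<open>t \<in> _\<close> \<open>t' \<in> _\<close> \<open>step_pair d n S t = _\<close> by auto
    next
      case greater then show ?thesis using * \<open>t \<in> _\<close> \<open>t' \<in> _\<close> \<open>step_pair d n S t = _\<close> by force
    qed
  qed
qed

lemma step_bij:
  assumes dn: "d \<le> n" and S: "S \<in> Cset d n"
  shows "bij_betw (step_pair d n S) {1..d * (n - d)} (Adm d n)"
proof -
  have inj: "inj_on (step_pair d n S) {1..d * (n - d)}" by (rule step_inj[OF dn S])
  have sub: "step_pair d n S ` {1..d * (n - d)} \<subseteq> Adm d n" using step_pair_spec(1)[OF dn S] by auto
  have "card (step_pair d n S ` {1..d * (n - d)}) = card (Adm d n)"
    using card_image[OF inj] card_Adm by simp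
  then have "step_pair d n S ` {1..d * (n - d)} = Adm d n"
    using card_subset_eq[OF finite_Adm sub] by simp
  then show ?thesis using inj by (simp add: bij_betw_def)
qed

definition prec :: "nat \<times> nat \<Rightarrow> nat \<times> nat \<Rightarrow> bool" where
  "prec a b \<longleftrightarrow> snd b \<le> snd a \<and> fst a + snd b \<le> fst b + snd a \<and> a \<noteq> b"

lemma chain_prec:
  assumes dn: "d \<le> n" and S: "S \<in> Cset d n"
    and t: "1 \<le> t" "t \<le> d * (n - d)" and t': "1 \<le> t'" "t' \<le> d * (n - d)"
    and pr: "prec (step_pair d n S t) (step_pair d n S t')"
  shows "t < t'"
proof (rule ccontr)
  assume "\<not> t < t'"
  then have tt: "t' \<le> t" by simp
  obtain s h where p: "step_pair d n S t = (s, h)" by (cases "step_pair d n S t")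
  obtain s' h' where p': "step_pair d n S t' = (s', h')" by (cases "step_pair d n S t'")
  have pr': "h' \<le> h" "s + h' \<le> s' + h" "(s, h) \<noteq> (s', h')" using pr p p' by (auto simp: prec_def)
  note F = step_facts[OF dn S t p] and F' = step_facts[OF dn S t' p']
  let ?y = "chain_elem S (t' - 1)"
  have yI: "?y \<in> Irows d n" using chain_Irows[OF dn S] t' by simp
  have big: "s + 1 \<le> ?y ! (h - 1)"
  proof (cases "h = h'")
    case True
    then have "s < s'" using pr' by auto
    then show ?thesis using F'(1) True by simp
  next
    case False
    then have hh: "h' < h" using pr' by simp
    then have "h' < d" using F(5) by simp
    then have "s' + 2 \<le> ?y ! h'" using F'(3) by simp
    moreover have "?y ! h' + (h - 1 - h') \<le> ?y ! (h - 1)"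
      using Irows_gap[OF yI, of h' "h - 1"] hh F(5) by simp
    ultimately show ?thesis using pr' hh by simp
  qed
  have "row_le ?y (chain_elem S (t - 1))" using chain_mono[OF dn S] tt t by simp
  then have "?y ! (h - 1) \<le> chain_elem S (t - 1) ! (h - 1)"
    using F(4,5) yI by (simp add: row_le_def Irows_length)
  then show False using big F(1) by simp
qed




definition cnt :: "nat \<Rightarrow> nat \<Rightarrow> (nat \<times> nat \<Rightarrow> nat) \<Rightarrow> nat \<Rightarrow> nat \<Rightarrow> nat" where
  "cnt d n lam h t = card {s. (s, h) \<in> Adm d n \<and> lam (s, h) \<le> t}"

definition rows_of :: "nat \<Rightarrow> nat \<Rightarrow> (nat \<times> nat \<Rightarrow> nat) \<Rightarrow> nat \<Rightarrow> row" where
  "rows_of d n lam t = map (\<lambda>k. Suc k + cnt d n lam (Suc k) t) [0..<d]"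

definition good_lam :: "nat \<Rightarrow> nat \<Rightarrow> (nat \<times> nat \<Rightarrow> nat) \<Rightarrow> bool" where
  "good_lam d n lam \<longleftrightarrow> bij_betw lam (Adm d n) {1..d * (n - d)} \<and>
     (\<forall>a\<in>Adm d n. \<forall>b\<in>Adm d n. prec a b \<longrightarrow> lam a < lam b)"

lemma fin_row_set: "finite {s. (s, h) \<in> Adm d n \<and> P s}"
proof -
  have "{s. (s, h) \<in> Adm d n \<and> P s} \<subseteq> {..n}" by (auto simp: Adm_iff)
  then show ?thesis by (rule finite_subset) simp
qed

context
  fixes d n lam
  assumes dn: "d \<le> n" and G: "good_lam d n lam"
begin

abbreviation "qq \<equiv> inv_into (Adm d n) lam"

lemma bij: "bij_betw lam (Adm d n) {1..d * (n - d)}" using G by (simp add: good_lam_def)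
lemma resp: "a \<in> Adm d n \<Longrightarrow> b \<in> Adm d n \<Longrightarrow> prec a b \<Longrightarrow> lam a < lam b"
  using G by (simp add: good_lam_def)

lemma qq_props:
  assumes "t \<in> {1..d * (n - d)}"
  shows "qq t \<in> Adm d n" "lam (qq t) = t"
  using assms bij by (auto simp: bij_betw_def intro: inv_into_into f_inv_into_f)

lemma lam_eq_iff:
  assumes "a \<in> Adm d n" "t \<in> {1..d * (n - d)}"
  shows "lam a = t \<longleftrightarrow> a = qq t"
  using assms bij qq_props[OF assms(2)] by (auto simp: bij_betw_def inv_into_f_f)

lemma lam_range: "a \<in> Adm d n \<Longrightarrow> lam a \<in> {1..d * (n - d)}"
  using bij by (auto simp: bij_betw_def)

lemma cnt0: "cnt d n lam h 0 = 0"
proof -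
  have "{s. (s, h) \<in> Adm d n \<and> lam (s, h) \<le> 0} = {}"
  proof (intro equalityI subsetI)
    fix s assume "s \<in> {s. (s, h) \<in> Adm d n \<and> lam (s, h) \<le> 0}"
    moreover have "(s, h) \<in> Adm d n \<Longrightarrow> lam (s, h) \<in> {1..d * (n - d)}" by (rule lam_range)
    ultimately show "s \<in> {}" by auto
  qed simp
  then show ?thesis unfolding cnt_def by (metis card.empty)
qed

lemma cnt_before:
  assumes t: "t \<in> {1..d * (n - d)}" and q: "qq t = (s, h)"
  shows "cnt d n lam h (t - 1) = s - h"
proof -
  have A: "(s, h) \<in> Adm d n" "lam (s, h) = t" using qq_props[OF t] q by auto
  then have sh: "1 \<le> h" "h \<le> d" "h \<le> s" "s < n - d + h" by (auto simp: Adm_iff)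
  have "{s'. (s', h) \<in> Adm d n \<and> lam (s', h) \<le> t - 1} = {h..<s}"
  proof
    show "{s'. (s', h) \<in> Adm d n \<and> lam (s', h) \<le> t - 1} \<subseteq> {h..<s}"
    proof
      fix s' assume s': "s' \<in> {s'. (s', h) \<in> Adm d n \<and> lam (s', h) \<le> t - 1}"
      then have a: "(s', h) \<in> Adm d n" "lam (s', h) \<le> t - 1" by auto
      have "h \<le> s'" using a by (simp add: Adm_iff)
      moreover have "s' < s"
      proof (rule ccontr)
        assume "\<not> s' < s"
        then consider "s' = s" | "s < s'" by linarith
        then show False
        proof cases
          case 1 then have "t \<le> t - 1" using a A by simp
          then show False using t by auto
        next
          case 2
          then have "prec (s, h) (s', h)" by (simp add: prec_def)
          then have "lam (s, h) < lam (s', h)" using resp A a by blast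
          then show False using a A t by simp
        qed
      qed
      ultimately show "s' \<in> {h..<s}" by simp
    qed
    show "{h..<s} \<subseteq> {s'. (s', h) \<in> Adm d n \<and> lam (s', h) \<le> t - 1}"
    proof
      fix s' assume s': "s' \<in> {h..<s}"
      then have a: "(s', h) \<in> Adm d n" using sh by (simp add: Adm_iff)
      have "prec (s', h) (s, h)" using s' by (simp add: prec_def)
      then have "lam (s', h) < t" using resp A a by metis
      then show "s' \<in> {s'. (s', h) \<in> Adm d n \<and> lam (s', h) \<le> t - 1}" using a by simp
    qed
  qed
  then show ?thesis by (simp add: cnt_def)
qed

lemma cnt_next:
  assumes t: "t \<in> {1..d * (n - d)}" and q: "qq t = (s, h)" and hd: "h < d"
  shows "s - h + 1 \<le> cnt d n lam (h + 1) (t - 1)"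
proof -
  have A: "(s, h) \<in> Adm d n" "lam (s, h) = t" using qq_props[OF t] q by auto
  then have sh: "1 \<le> h" "h \<le> d" "h \<le> s" "s < n - d + h" by (auto simp: Adm_iff)
  have "{h+1..s+1} \<subseteq> {s'. (s', h + 1) \<in> Adm d n \<and> lam (s', h + 1) \<le> t - 1}"
  proof
    fix s' assume s': "s' \<in> {h+1..s+1}"
    then have a: "(s', h + 1) \<in> Adm d n" using sh hd by (simp add: Adm_iff)
    have "prec (s', h + 1) (s, h)" using s' by (simp add: prec_def)
    then have "lam (s', h + 1) < t" using resp A a by metis
    then show "s' \<in> {s'. (s', h + 1) \<in> Adm d n \<and> lam (s', h + 1) \<le> t - 1}" using a by simp
  qed
  then have "card {h+1..s+1} \<le> cnt d n lam (h + 1) (t - 1)"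
    unfolding cnt_def by (rule card_mono[OF fin_row_set])
  then show ?thesis using sh by simp
qed

lemma cnt_step:
  assumes t: "t \<in> {1..d * (n - d)}" and q: "qq t = (s, h)"
  shows "cnt d n lam h' t = cnt d n lam h' (t - 1) + (if h' = h then 1 else 0)"
proof -
  have A: "(s, h) \<in> Adm d n" "lam (s, h) = t" using qq_props[OF t] q by auto
  have eq: "{s'. (s', h') \<in> Adm d n \<and> lam (s', h') \<le> t} =
        {s'. (s', h') \<in> Adm d n \<and> lam (s', h') \<le> t - 1} \<union> (if h' = h then {s} else {})"
  proof -
    have "\<And>s'. (s', h') \<in> Adm d n \<Longrightarrow> lam (s', h') = t \<longleftrightarrow> (s', h') = (s, h)"
      using lam_eq_iff t q by simp
    moreover have "\<And>v. v \<le> t \<longleftrightarrow> v \<le> t - 1 \<or> v = t" using t by auto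
    ultimately show ?thesis using A t by auto
  qed
  have disj: "{s'. (s', h') \<in> Adm d n \<and> lam (s', h') \<le> t - 1} \<inter> (if h' = h then {s} else {}) = {}"
    using A t by auto
  show ?thesis unfolding cnt_def eq
    by (subst card_Un_disjoint[OF fin_row_set _ disj]) auto
qed

lemma rows_len: "length (rows_of d n lam t) = d" by (simp add: rows_of_def)

lemma rows_nth: "k < d \<Longrightarrow> rows_of d n lam t ! k = Suc k + cnt d n lam (Suc k) t"
  by (simp add: rows_of_def)

lemma rows0: "rows_of d n lam 0 = rmin d"
  by (simp add: rows_of_def rmin_def cnt0)

lemma rows_step:
  assumes t: "t \<in> {1..d * (n - d)}" and q: "qq t = (s, h)"
  shows "root_op s h (rows_of d n lam (t - 1)) = Some (rows_of d n lam t)"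
proof -
  have A: "(s, h) \<in> Adm d n" using qq_props[OF t] q by auto
  then have sh: "1 \<le> h" "h \<le> d" "h \<le> s" "s < n - d + h" by (auto simp: Adm_iff)
  have e1: "rows_of d n lam (t - 1) ! (h - 1) = s"
    using rows_nth[of "h - 1"] cnt_before[OF t q] sh by simp
  have e2: "h < d \<Longrightarrow> s + 2 \<le> rows_of d n lam (t - 1) ! h"
    using rows_nth[of h] cnt_next[OF t q] sh by simp
  have e3: "rows_of d n lam t = (rows_of d n lam (t - 1))[h - 1 := s + 1]"
  proof (rule nth_equalityI)
    show "length (rows_of d n lam t) = length ((rows_of d n lam (t - 1))[h - 1 := s + 1])"
      by (simp add: rows_len)
    fix k assume "k < length (rows_of d n lam t)"
    then have k: "k < d" by (simp add: rows_len)
    show "rows_of d n lam t ! k = (rows_of d n lam (t - 1))[h - 1 := s + 1] ! k"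
    proof (cases "k = h - 1")
      case True
      then show ?thesis using k rows_nth cnt_step[OF t q, of h] e1 sh rows_len by simp
    next
      case False
      then have "Suc k \<noteq> h" using sh by simp
      then show ?thesis using k rows_nth cnt_step[OF t q, of "Suc k"] False by simp
    qed
  qed
  have e2': "h = length (rows_of d n lam (t - 1)) \<or> s + 2 \<le> rows_of d n lam (t - 1) ! h"
    using e2 sh rows_len by (cases "h < d") auto
  show ?thesis unfolding root_op_Some
    using e1 e2' e3 sh rows_len by simp
qed

lemma rows_valid: "valid_rows d n (rows_of d n lam)"
proof -
  have I: "rows_of d n lam t \<in> Irows d n" if "t \<le> d * (n - d)" for t
    using that
  proof (induction t)
    case 0 then show ?case using rows0 rmin_Irows[OF dn] by simp
  next
    case (Suc t)
    then have t: "Suc t \<in> {1..d * (n - d)}" by simp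
    obtain s h where q: "qq (Suc t) = (s, h)" by (cases "qq (Suc t)")
    have A: "(s, h) \<in> Adm d n" using qq_props[OF t] q by auto
    then have "s + 1 \<le> n" by (auto simp: Adm_iff)
    then show ?case using root_op_Irows[OF _ rows_step[OF t q]] Suc by simp
  qed
  show ?thesis unfolding valid_rows_def
  proof (intro conjI allI impI)
    show "rows_of d n lam 0 = rmin d" by (rule rows0)
    show "\<And>t. t \<le> d * (n - d) \<Longrightarrow> rows_of d n lam t \<in> Irows d n" using I .
    fix t assume "t < d * (n - d)"
    then have t: "Suc t \<in> {1..d * (n - d)}" by simp
    obtain s h where q: "qq (Suc t) = (s, h)" by (cases "qq (Suc t)")
    show "\<exists>s h. root_op s h (rows_of d n lam t) = Some (rows_of d n lam (Suc t))"
      using rows_step[OF t q] by auto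
  qed
qed

lemma chain_of_lam:
  defines "S \<equiv> rows_of d n lam ` {0..d * (n - d)}"
  shows "S \<in> Cset d n" "\<And>t. t \<le> d * (n - d) \<Longrightarrow> chain_elem S t = rows_of d n lam t"
    "\<And>t. t \<in> {1..d * (n - d)} \<Longrightarrow> step_pair d n S t = qq t"
proof -
  show S: "S \<in> Cset d n" using chain_of_valid(1)[OF rows_valid] S_def by simp
  show ce: "\<And>t. t \<le> d * (n - d) \<Longrightarrow> chain_elem S t = rows_of d n lam t"
    using chain_of_valid(2)[OF rows_valid] S_def by simp
  fix t assume t: "t \<in> {1..d * (n - d)}"
  obtain s h where q: "qq t = (s, h)" by (cases "qq t")
  have R1: "root_op s h (rows_of d n lam (t - 1)) = Some (rows_of d n lam t)" by (rule rows_step[OF t q])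
  obtain s' h' where p: "step_pair d n S t = (s', h')" by (cases "step_pair d n S t")
  have c1: "chain_elem S (t - 1) = rows_of d n lam (t - 1)" "chain_elem S t = rows_of d n lam t"
    using ce t by auto
  have R2: "root_op s' h' (rows_of d n lam (t - 1)) = Some (rows_of d n lam t)"
    using step_pair_spec(2)[OF dn S, of t] t c1 p by simp
  have "t - 1 \<le> d * (n - d)" using t by auto
  then have I: "rows_of d n lam (t - 1) \<in> Irows d n" using rows_valid by (simp add: valid_rows_def)
  show "step_pair d n S t = qq t" using root_op_unique[OF I R1 R2] p q by simp
qed

end

lemma good_lam_chain:
  assumes dn: "d \<le> n" and S: "S \<in> Cset d n"
  shows "good_lam d n (inv_into {1..d * (n - d)} (step_pair d n S))"
proof -
  let ?l = "inv_into {1..d * (n - d)} (step_pair d n S)"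
  have B: "bij_betw (step_pair d n S) {1..d * (n - d)} (Adm d n)" by (rule step_bij[OF dn S])
  have B': "bij_betw ?l (Adm d n) {1..d * (n - d)}" by (rule bij_betw_inv_into[OF B])
  have "?l a < ?l b" if a: "a \<in> Adm d n" and b: "b \<in> Adm d n" and p: "prec a b" for a b
  proof -
    have aim: "a \<in> step_pair d n S ` {1..d * (n - d)}" using B a by (simp add: bij_betw_def)
    have bim: "b \<in> step_pair d n S ` {1..d * (n - d)}" using B b by (simp add: bij_betw_def)
    have ta: "?l a \<in> {1..d * (n - d)}" "step_pair d n S (?l a) = a"
      using inv_into_into[OF aim] f_inv_into_f[OF aim] by auto
    have tb: "?l b \<in> {1..d * (n - d)}" "step_pair d n S (?l b) = b"
      using inv_into_into[OF bim] f_inv_into_f[OF bim] by auto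
    show ?thesis using chain_prec[OF dn S, of "?l a" "?l b"] ta tb p by simp
  qed
  then show ?thesis using B' by (simp add: good_lam_def)
qed




definition lamR :: "nat \<Rightarrow> nat \<Rightarrow> nat \<times> nat \<Rightarrow> nat" where
  "lamR d n p = (d - snd p) * (n - d) + (fst p - snd p) + 1"

definition lamL :: "nat \<Rightarrow> nat \<Rightarrow> nat \<times> nat \<Rightarrow> nat" where
  "lamL d n p = (fst p - snd p) * d + (d - snd p) + 1"

lemma mult_step: "(i::nat) < j \<Longrightarrow> x < m \<Longrightarrow> i * m + x < j * m"
proof -
  assume "i < j" "x < m"
  have "(i + 1) * m \<le> j * m" using \<open>i < j\<close> by (intro mult_le_mono1) simp
  then show "i * m + x < j * m" using \<open>x < m\<close> by simp
qed

lemma lamR_lt: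
  assumes "(s, h) \<in> Adm d n" "(s', h') \<in> Adm d n" "h' < h"
  shows "lamR d n (s, h) < lamR d n (s', h')"
proof -
  have "(d - h) * (n - d) + (s - h) < (d - h') * (n - d)"
    using assms by (intro mult_step) (auto simp: Adm_iff)
  then show ?thesis by (simp add: lamR_def)
qed

lemma lamL_lt:
  assumes "(s, h) \<in> Adm d n" "(s', h') \<in> Adm d n" "s - h < s' - h'"
  shows "lamL d n (s, h) < lamL d n (s', h')"
proof -
  have "(s - h) * d + (d - h) < (s' - h') * d"
    using assms by (intro mult_step) (auto simp: Adm_iff)
  then show ?thesis by (simp add: lamL_def)
qed

lemma lamR_range: assumes "a \<in> Adm d n" shows "lamR d n a \<in> {1..d * (n - d)}"
proof -
  obtain s h where a: "a = (s, h)" by (cases a)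
  have "(d - h) * (n - d) + (s - h) < d * (n - d)"
    using assms a by (intro mult_step) (auto simp: Adm_iff)
  then show ?thesis using a by (simp add: lamR_def)
qed

lemma lamL_range: assumes "a \<in> Adm d n" shows "lamL d n a \<in> {1..d * (n - d)}"
proof -
  obtain s h where a: "a = (s, h)" by (cases a)
  have "(s - h) * d + (d - h) < (n - d) * d"
    using assms a by (intro mult_step) (auto simp: Adm_iff)
  then show ?thesis using a by (simp add: lamL_def mult.commute)
qed

lemma bij_from_inj:
  assumes "inj_on f (Adm d n)" "\<And>a. a \<in> Adm d n \<Longrightarrow> f a \<in> {1..d * (n - d)}"
  shows "bij_betw f (Adm d n) {1..d * (n - d)}"
proof -
  have sub: "f ` Adm d n \<subseteq> {1..d * (n - d)}" using assms(2) by auto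
  have "card (f ` Adm d n) = card {1..d * (n - d)}"
    using card_image[OF assms(1)] card_Adm by simp
  then have "f ` Adm d n = {1..d * (n - d)}" using card_subset_eq[OF _ sub] by simp
  then show ?thesis using assms(1) by (simp add: bij_betw_def)
qed

lemma lamR_inj: "inj_on (lamR d n) (Adm d n)"
proof (rule inj_onI)
  fix a b assume a: "a \<in> Adm d n" and b: "b \<in> Adm d n" and e: "lamR d n a = lamR d n b"
  obtain s h where ah: "a = (s, h)" by (cases a)
  obtain s' h' where bh: "b = (s', h')" by (cases b)
  have "\<not> h' < h" using lamR_lt[of s h d n s' h'] a b e ah bh by auto
  moreover have "\<not> h < h'" using lamR_lt[of s' h' d n s h] a b e ah bh by auto
  ultimately have hh: "h = h'" by simp
  then have "s - h = s' - h'" using e ah bh by (simp add: lamR_def)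
  then show "a = b" using hh ah bh a b by (auto simp: Adm_iff)
qed

lemma lamL_inj: "inj_on (lamL d n) (Adm d n)"
proof (rule inj_onI)
  fix a b assume a: "a \<in> Adm d n" and b: "b \<in> Adm d n" and e: "lamL d n a = lamL d n b"
  obtain s h where ah: "a = (s, h)" by (cases a)
  obtain s' h' where bh: "b = (s', h')" by (cases b)
  have "\<not> s' - h' < s - h" using lamL_lt[of s' h' d n s h] a b e ah bh by auto
  moreover have "\<not> s - h < s' - h'" using lamL_lt[of s h d n s' h'] a b e ah bh by auto
  ultimately have hh: "s - h = s' - h'" by simp
  then have "d - h = d - h'" using e ah bh by (simp add: lamL_def)
  then show "a = b" using hh ah bh a b by (auto simp: Adm_iff)
qed

lemma good_lamR: "good_lam d n (lamR d n)"
  unfolding good_lam_def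
proof (intro conjI ballI impI)
  show "bij_betw (lamR d n) (Adm d n) {1..d * (n - d)}"
    by (rule bij_from_inj[OF lamR_inj lamR_range])
  fix a b assume a: "a \<in> Adm d n" and b: "b \<in> Adm d n" and p: "prec a b"
  obtain s h where ah: "a = (s, h)" by (cases a)
  obtain s' h' where bh: "b = (s', h')" by (cases b)
  show "lamR d n a < lamR d n b"
  proof (cases "h' < h")
    case True then show ?thesis using lamR_lt a b ah bh by blast
  next
    case False
    then have "h = h'" "s < s'" using p ah bh by (auto simp: prec_def)
    then show ?thesis using ah bh a by (auto simp: lamR_def Adm_iff)
  qed
qed

lemma good_lamL: "good_lam d n (lamL d n)"
  unfolding good_lam_def
proof (intro conjI ballI impI)
  show "bij_betw (lamL d n) (Adm d n) {1..d * (n - d)}"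
    by (rule bij_from_inj[OF lamL_inj lamL_range])
  fix a b assume a: "a \<in> Adm d n" and b: "b \<in> Adm d n" and p: "prec a b"
  obtain s h where ah: "a = (s, h)" by (cases a)
  obtain s' h' where bh: "b = (s', h')" by (cases b)
  have hs: "h \<le> s" "h' \<le> s'" using a b ah bh by (auto simp: Adm_iff)
  show "lamL d n a < lamL d n b"
  proof (cases "s - h < s' - h'")
    case True then show ?thesis using lamL_lt a b ah bh by blast
  next
    case False
    then have "s - h = s' - h'" using p ah bh hs by (auto simp: prec_def)
    moreover then have "h' < h" using p ah bh hs by (auto simp: prec_def)
    ultimately show ?thesis using ah bh a b by (auto simp: lamL_def Adm_iff)
  qed
qed

lemma twodim:
  assumes a: "a \<in> Adm d n" and b: "b \<in> Adm d n"
    and R: "lamR d n a < lamR d n b" and L: "lamL d n a < lamL d n b"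
  shows "prec a b"
proof -
  obtain s h where ah: "a = (s, h)" by (cases a)
  obtain s' h' where bh: "b = (s', h')" by (cases b)
  have hs: "h \<le> s" "h' \<le> s'" using a b ah bh by (auto simp: Adm_iff)
  have "\<not> h < h'" using lamR_lt[of s' h' d n s h] a b ah bh R by auto
  moreover have "\<not> s' - h' < s - h" using lamL_lt[of s' h' d n s h] a b ah bh L by auto
  ultimately show ?thesis using ah bh hs R by (auto simp: prec_def)
qed




lemma chain_last:
  assumes dn: "d \<le> n" and S: "S \<in> Cset d n"
  shows "chain_elem S (d * (n - d)) = rmax d n"
proof -
  have I: "chain_elem S (d * (n - d)) \<in> Irows d n" using chain_Irows[OF dn S] by simp
  have l: "row_len (chain_elem S (d * (n - d))) = d * (n - d)" using valid_of_chain(3)[OF dn S] by simp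
  show ?thesis using row_le_len_eq[OF I rmax_Irows[OF dn] le_rmax[OF I]] l row_len_rmax by simp
qed

lemma chains_differ:
  assumes dn: "d \<le> n" and S1: "S1 \<in> Cset d n" and S2: "S2 \<in> Cset d n" and ne: "S1 \<noteq> S2"
  shows "\<exists>T < d * (n - d). chain_elem S1 T \<noteq> chain_elem S2 T \<and>
           (\<forall>t. T < t \<and> t \<le> d * (n - d) \<longrightarrow> chain_elem S1 t = chain_elem S2 t)"
proof -
  let ?r = "d * (n - d)"
  define D where "D = {t. t \<le> ?r \<and> chain_elem S1 t \<noteq> chain_elem S2 t}"
  have "D \<noteq> {}"
  proof
    assume "D = {}"
    then have "\<forall>t\<le>?r. chain_elem S1 t = chain_elem S2 t" by (auto simp: D_def)
    then have "chain_elem S1 ` {0..?r} = chain_elem S2 ` {0..?r}" by auto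
    then show False using valid_of_chain(2)[OF dn S1] valid_of_chain(2)[OF dn S2] ne by simp
  qed
  moreover have fin: "finite D" by (auto simp: D_def)
  ultimately have TD: "Max D \<in> D" and Tmax: "\<And>t. t \<in> D \<Longrightarrow> t \<le> Max D" by auto
  define T where "T = Max D"
  have "T \<noteq> ?r" using TD T_def D_def chain_last[OF dn S1] chain_last[OF dn S2] by auto
  then have "T < ?r" using TD T_def D_def by auto
  moreover have "chain_elem S1 T \<noteq> chain_elem S2 T" using TD T_def D_def by auto
  moreover have "\<forall>t. T < t \<and> t \<le> ?r \<longrightarrow> chain_elem S1 t = chain_elem S2 t"
  proof (intro allI impI)
    fix t assume t: "T < t \<and> t \<le> ?r"
    then have "t \<notin> D" using Tmax T_def by (meson leD)
    then show "chain_elem S1 t = chain_elem S2 t" using t D_def by simp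
  qed
  ultimately show ?thesis by blast
qed

lemma word_decomp:
  assumes "T < r" "r = d * (n - d)"
  shows "chain_word d n S = concat (map (chain_elem S) (rev [Suc T..<Suc r])) @ chain_elem S T @
     concat (map (chain_elem S) (rev [0..<T]))"
proof -
  have "[0..<Suc r] = [0..<T] @ [T..<T + (Suc r - T)]"
    using upt_add_eq_append[of 0 T "Suc r - T"] assms by simp
  also have "[T..<T + (Suc r - T)] = T # [Suc T..<Suc r]" using assms by (simp add: upt_conv_Cons)
  finally have "[0..<Suc r] = [0..<T] @ T # [Suc T..<Suc r]" .
  then show ?thesis unfolding chain_word_def using assms by simp
qed

lemma lex_nth:
  assumes "length a = length b" "i < length a" "\<forall>j<i. a!j = b!j" "a!i < b!i"
  shows "(a, b) \<in> lexord {(x, y). x < y}"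
proof -
  have "take i a = take i b" using assms by (intro nth_take_lemma) auto
  then show ?thesis unfolding lexord_take_index_conv using assms by auto
qed

lemma lex_word:
  assumes dn: "d \<le> n" and S1: "S1 \<in> Cset d n" and S2: "S2 \<in> Cset d n" and T: "T < d * (n - d)"
    and eq: "\<forall>t. T < t \<and> t \<le> d * (n - d) \<longrightarrow> chain_elem S1 t = chain_elem S2 t"
    and lx: "(chain_elem S1 T, chain_elem S2 T) \<in> lexord {(x, y). x < y}"
  shows "lex_less (chain_word d n S1) (chain_word d n S2)"
proof -
  let ?r = "d * (n - d)"
  have e: "map (chain_elem S1) (rev [Suc T..<Suc ?r]) = map (chain_elem S2) (rev [Suc T..<Suc ?r])"
    using eq by (intro map_cong) auto
  have len: "length (chain_elem S2 T) \<le> length (chain_elem S1 T)"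
    using chain_Irows[OF dn S1, of T] chain_Irows[OF dn S2, of T] T by (simp add: Irows_length)
  show ?thesis unfolding lex_less_def
    using word_decomp[OF T refl, of S1] word_decomp[OF T refl, of S2] e
    by (simp del: upt_Suc) (intro lexord_append_leftI lexord_sufI[OF lx len])
qed

lemma lex_unique:
  assumes "\<And>C'. C' \<in> Cset d n \<Longrightarrow> C' \<noteq> C \<Longrightarrow> lex_less (chain_word d n C) (chain_word d n C')"
    and "C \<in> Cset d n"
  shows "(THE C. C \<in> Cset d n \<and> (\<forall>C'\<in>Cset d n. C' \<noteq> C \<longrightarrow> lex_less (chain_word d n C) (chain_word d n C'))) = C"
proof (rule the_equality)
  show "C \<in> Cset d n \<and> (\<forall>C'\<in>Cset d n. C' \<noteq> C \<longrightarrow> lex_less (chain_word d n C) (chain_word d n C'))"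
    using assms by blast
next
  fix D assume D: "D \<in> Cset d n \<and> (\<forall>C'\<in>Cset d n. C' \<noteq> D \<longrightarrow> lex_less (chain_word d n D) (chain_word d n C'))"
  show "D = C"
  proof (rule ccontr)
    assume ne: "D \<noteq> C"
    have "lex_less (chain_word d n D) (chain_word d n C)" using D assms(2) ne by blast
    moreover have "lex_less (chain_word d n C) (chain_word d n D)" using assms(1) D ne by blast
    ultimately have "(chain_word d n D, chain_word d n D) \<in> lexord {(x::nat, y). x < y}"
      unfolding lex_less_def by (rule lexord_trans) (auto simp: trans_def)
    moreover have "(chain_word d n D, chain_word d n D) \<notin> lexord {(x::nat, y). x < y}"
      by (rule lexord_irreflexive) simp
    ultimately show False by contradiction
  qed
qed

lemma lex_unique2:
  assumes "\<And>C'. C' \<in> Cset d n \<Longrightarrow> C' \<noteq> C \<Longrightarrow> lex_less (chain_word d n C') (chain_word d n C)"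
    and "C \<in> Cset d n"
  shows "(THE C. C \<in> Cset d n \<and> (\<forall>C'\<in>Cset d n. C' \<noteq> C \<longrightarrow> lex_less (chain_word d n C') (chain_word d n C))) = C"
proof (rule the_equality)
  show "C \<in> Cset d n \<and> (\<forall>C'\<in>Cset d n. C' \<noteq> C \<longrightarrow> lex_less (chain_word d n C') (chain_word d n C))"
    using assms by blast
next
  fix D assume D: "D \<in> Cset d n \<and> (\<forall>C'\<in>Cset d n. C' \<noteq> D \<longrightarrow> lex_less (chain_word d n C') (chain_word d n D))"
  show "D = C"
  proof (rule ccontr)
    assume ne: "D \<noteq> C"
    have "lex_less (chain_word d n C) (chain_word d n D)" using D assms(2) ne by blast
    moreover have "lex_less (chain_word d n D) (chain_word d n C)" using assms(1) D ne by blast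
    ultimately have "(chain_word d n D, chain_word d n D) \<in> lexord {(x::nat, y). x < y}"
      unfolding lex_less_def using lexord_trans[of "chain_word d n D" "chain_word d n C" _ "chain_word d n D"]
      by (auto simp: trans_def)
    moreover have "(chain_word d n D, chain_word d n D) \<notin> lexord {(x::nat, y). x < y}"
      by (rule lexord_irreflexive) simp
    ultimately show False by contradiction
  qed
qed




definition CR :: "nat \<Rightarrow> nat \<Rightarrow> row set" where
  "CR d n = rows_of d n (lamR d n) ` {0..d * (n - d)}"
definition CL :: "nat \<Rightarrow> nat \<Rightarrow> row set" where
  "CL d n = rows_of d n (lamL d n) ` {0..d * (n - d)}"

lemma CR_facts:
  assumes dn: "d \<le> n"
  shows "CR d n \<in> Cset d n" "\<And>t. t \<le> d * (n - d) \<Longrightarrow> chain_elem (CR d n) t = rows_of d n (lamR d n) t"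
    "\<And>t. t \<in> {1..d * (n - d)} \<Longrightarrow> step_pair d n (CR d n) t = inv_into (Adm d n) (lamR d n) t"
  using chain_of_lam[OF dn good_lamR] unfolding CR_def by auto

lemma CL_facts:
  assumes dn: "d \<le> n"
  shows "CL d n \<in> Cset d n" "\<And>t. t \<le> d * (n - d) \<Longrightarrow> chain_elem (CL d n) t = rows_of d n (lamL d n) t"
    "\<And>t. t \<in> {1..d * (n - d)} \<Longrightarrow> step_pair d n (CL d n) t = inv_into (Adm d n) (lamL d n) t"
  using chain_of_lam[OF dn good_lamL] unfolding CL_def by auto

lemma cntR0:
  assumes "(s, h) \<in> Adm d n" "lamR d n (s, h) = t" "k < h"
  shows "cnt d n (lamR d n) k t = 0"
proof -
  have "{s'. (s', k) \<in> Adm d n \<and> lamR d n (s', k) \<le> t} = {}"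
    using lamR_lt[OF assms(1) _ assms(3)] assms(2) by force
  then show ?thesis unfolding cnt_def by (metis card.empty)
qed

lemma cntL_full:
  assumes a: "(s, h) \<in> Adm d n" and t: "lamL d n (s, h) = t" and k: "h \<le> k" "k \<le> d"
  shows "cnt d n (lamL d n) k t = s - h + 1"
proof -
  have sh: "1 \<le> h" "h \<le> d" "h \<le> s" "s < n - d + h" using a by (auto simp: Adm_iff)
  have "{s'. (s', k) \<in> Adm d n \<and> lamL d n (s', k) \<le> t} = {k..k + (s - h)}"
  proof (intro equalityI subsetI)
    fix s' assume "s' \<in> {s'. (s', k) \<in> Adm d n \<and> lamL d n (s', k) \<le> t}"
    then have b: "(s', k) \<in> Adm d n" "lamL d n (s', k) \<le> t" by auto
    have "k \<le> s'" using b by (simp add: Adm_iff)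
    moreover have "\<not> s - h < s' - k" using lamL_lt[OF a b(1)] b(2) t by auto
    ultimately show "s' \<in> {k..k + (s - h)}" by simp
  next
    fix s' assume s': "s' \<in> {k..k + (s - h)}"
    then have b: "(s', k) \<in> Adm d n" using sh k by (auto simp: Adm_iff)
    have "lamL d n (s', k) \<le> lamL d n (s, h)"
    proof (cases "s' - k < s - h")
      case True then show ?thesis using lamL_lt[OF b a] by simp
    next
      case False
      then have "s' - k = s - h" using s' by auto
      then show ?thesis using k by (simp add: lamL_def)
    qed
    then show "s' \<in> {s'. (s', k) \<in> Adm d n \<and> lamL d n (s', k) \<le> t}" using b t by simp
  qed
  then show ?thesis unfolding cnt_def by simp
qed

lemma CR_min:
  assumes dn: "d \<le> n" and S: "S \<in> Cset d n" and ne: "S \<noteq> CR d n"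
  shows "lex_less (chain_word d n (CR d n)) (chain_word d n S)"
proof -
  let ?r = "d * (n - d)"
  note CRin = CR_facts(1)[OF dn]
  obtain T where T: "T < ?r" "chain_elem (CR d n) T \<noteq> chain_elem S T"
    "\<forall>t. T < t \<and> t \<le> ?r \<longrightarrow> chain_elem (CR d n) t = chain_elem S t"
    using chains_differ[OF dn CRin S] ne by metis
  let ?x = "chain_elem (CR d n)" and ?y = "chain_elem S"
  have t1: "Suc T \<in> {1..?r}" using T by simp
  have t1': "1 \<le> Suc T" "Suc T \<le> ?r" using T by auto
  obtain s h where q: "step_pair d n (CR d n) (Suc T) = (s, h)" by (cases "step_pair d n (CR d n) (Suc T)")
  obtain s' k where q': "step_pair d n S (Suc T) = (s', k)" by (cases "step_pair d n S (Suc T)")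
  have qq: "inv_into (Adm d n) (lamR d n) (Suc T) = (s, h)" using CR_facts(3)[OF dn t1] q by simp
  have A: "(s, h) \<in> Adm d n" "lamR d n (s, h) = Suc T"
    using qq_props[OF dn good_lamR t1] qq by auto
  note FX = step_facts[OF dn CRin t1' q] and FY = step_facts[OF dn S t1' q']
  have z: "?x (Suc T) = ?y (Suc T)" using T by simp
  have xI: "?x T \<in> Irows d n" and yI: "?y T \<in> Irows d n"
    using chain_Irows[OF dn CRin, of T] chain_Irows[OF dn S, of T] T by auto
  have lx: "length (?x T) = d" "length (?y T) = d" using xI yI by (auto simp: Irows_length)
  have FX6: "?x (Suc T) = (?x T)[h - 1 := s + 1]" and FY6: "?y (Suc T) = (?y T)[k - 1 := s' + 1]"
    using FX(6) FY(6) by simp_all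
  have FX1: "?x T ! (h - 1) = s" and FY1: "?y T ! (k - 1) = s'" using FX(1) FY(1) by simp_all
  have hk: "h \<noteq> k"
  proof
    assume hk: "h = k"
    then have "s' + 1 = s + 1" using FX6 FY6 z lx FX(4,5) FY(4,5)
      by (metis diff_less less_le_trans nth_list_update_eq zero_less_one)
    then have "s' = s" by simp
    then have "?x T = ?y T" using FX6 FY6 z hk FX1 FY1 by (metis list_update_id list_update_overwrite)
    then show False using T(2) by simp
  qed
  have "\<not> k < h"
  proof
    assume kh: "k < h"
    have kd: "k - 1 < d" using FY(4,5) by simp
    have zr: "?x (Suc T) = rows_of d n (lamR d n) (Suc T)" using CR_facts(2)[OF dn] T by simp
    have "?x (Suc T) ! (k - 1) = Suc (k - 1) + cnt d n (lamR d n) (Suc (k - 1)) (Suc T)"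
      using zr rows_nth[OF dn good_lamR kd] by simp
    also have "Suc (k - 1) = k" using FY(4) by simp
    finally have "?x (Suc T) ! (k - 1) = k" using cntR0[OF A kh] by simp
    moreover have "?y (Suc T) ! (k - 1) = s' + 1" using FY(2) by simp
    moreover have "Suc (k - 1) \<le> ?y T ! (k - 1)" using Irows_bounds(1)[OF yI kd] .
    ultimately show False using z FY1 FY(4) by simp
  qed
  then have hk2: "h < k" using hk by simp
  have "(?x T, ?y T) \<in> lexord {(x, y). x < y}"
  proof (rule lex_nth)
    show "length (?x T) = length (?y T)" using lx by simp
    show "h - 1 < length (?x T)" using lx FX(4,5) by simp
    show "\<forall>j<h - 1. ?x T ! j = ?y T ! j"
    proof (intro allI impI)
      fix j assume j: "j < h - 1"
      have "?x (Suc T) ! j = ?x T ! j" using FX6 j by simp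
      moreover have "?y (Suc T) ! j = ?y T ! j" using FY6 j hk2 by simp
      ultimately show "?x T ! j = ?y T ! j" using z by simp
    qed
    have "?y (Suc T) ! (h - 1) = ?y T ! (h - 1)" using FY6 hk2 FX(4) by simp
    moreover have "?x (Suc T) ! (h - 1) = s + 1" using FX(2) by simp
    ultimately show "?x T ! (h - 1) < ?y T ! (h - 1)" using z FX1 by simp
  qed
  then show ?thesis using lex_word[OF dn CRin S T(1) T(3)] by simp
qed

lemma CL_max:
  assumes dn: "d \<le> n" and S: "S \<in> Cset d n" and ne: "S \<noteq> CL d n"
  shows "lex_less (chain_word d n S) (chain_word d n (CL d n))"
proof -
  let ?r = "d * (n - d)"
  note CLin = CL_facts(1)[OF dn]
  obtain T where T: "T < ?r" "chain_elem S T \<noteq> chain_elem (CL d n) T"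
    "\<forall>t. T < t \<and> t \<le> ?r \<longrightarrow> chain_elem S t = chain_elem (CL d n) t"
    using chains_differ[OF dn S CLin] ne by metis
  let ?x = "chain_elem (CL d n)" and ?y = "chain_elem S"
  have t1: "Suc T \<in> {1..?r}" using T by simp
  have t1': "1 \<le> Suc T" "Suc T \<le> ?r" using T by auto
  obtain s h where q: "step_pair d n (CL d n) (Suc T) = (s, h)" by (cases "step_pair d n (CL d n) (Suc T)")
  obtain s' k where q': "step_pair d n S (Suc T) = (s', k)" by (cases "step_pair d n S (Suc T)")
  have qq: "inv_into (Adm d n) (lamL d n) (Suc T) = (s, h)" using CL_facts(3)[OF dn t1] q by simp
  have A: "(s, h) \<in> Adm d n" "lamL d n (s, h) = Suc T"
    using qq_props[OF dn good_lamL t1] qq by auto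
  note FX = step_facts[OF dn CLin t1' q] and FY = step_facts[OF dn S t1' q']
  have z: "?x (Suc T) = ?y (Suc T)" using T by simp
  have xI: "?x T \<in> Irows d n" and yI: "?y T \<in> Irows d n"
    using chain_Irows[OF dn CLin, of T] chain_Irows[OF dn S, of T] T by auto
  have lx: "length (?x T) = d" "length (?y T) = d" using xI yI by (auto simp: Irows_length)
  have FX6: "?x (Suc T) = (?x T)[h - 1 := s + 1]" and FY6: "?y (Suc T) = (?y T)[k - 1 := s' + 1]"
    using FX(6) FY(6) by simp_all
  have FX1: "?x T ! (h - 1) = s" and FY1: "?y T ! (k - 1) = s'" using FX(1) FY(1) by simp_all
  have hk: "h \<noteq> k"
  proof
    assume hk: "h = k"
    then have "s' + 1 = s + 1" using FX6 FY6 z lx FX(4,5) FY(4,5)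
      by (metis diff_less less_le_trans nth_list_update_eq zero_less_one)
    then have "s' = s" by simp
    then have "?x T = ?y T" using FX6 FY6 z hk FX1 FY1 by (metis list_update_id list_update_overwrite)
    then show False using T(2) by simp
  qed
  have "\<not> h < k"
  proof
    assume kh: "h < k"
    have kd: "k - 1 < d" "k - 2 < d" using FY(4,5) by auto
    have zr: "?x (Suc T) = rows_of d n (lamL d n) (Suc T)" using CL_facts(2)[OF dn] T by simp
    have "?x (Suc T) ! (k - 1) = Suc (k - 1) + cnt d n (lamL d n) (Suc (k - 1)) (Suc T)"
      using zr rows_nth[OF dn good_lamL kd(1)] by simp
    also have "Suc (k - 1) = k" using FY(4) by simp
    finally have e1: "?x (Suc T) ! (k - 1) = k + (s - h + 1)" using cntL_full[OF A, of k] kh FY(5) by simp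
    have "?x (Suc T) ! (k - 2) = Suc (k - 2) + cnt d n (lamL d n) (Suc (k - 2)) (Suc T)"
      using zr rows_nth[OF dn good_lamL kd(2)] by simp
    also have "Suc (k - 2) = k - 1" using kh FX(4) by simp
    finally have e2: "?x (Suc T) ! (k - 2) = (k - 1) + (s - h + 1)"
      using cntL_full[OF A, of "k - 1"] kh FY(5) by simp
    have "?y (Suc T) ! (k - 2) = ?y T ! (k - 2)" using FY6 kh FX(4) by simp
    moreover have "?y (Suc T) ! (k - 1) = s' + 1" using FY(2) by simp
    moreover have "?y T ! (k - 2) < ?y T ! Suc (k - 2)" using yI kd kh FX(4) by (simp add: Irows_iff)
    moreover have "Suc (k - 2) = k - 1" using kh FX(4) by simp
    ultimately show False using z FY1 e1 e2 kh FX(4) by simp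
  qed
  then have hk2: "k < h" using hk by simp
  have "(?y T, ?x T) \<in> lexord {(x, y). x < y}"
  proof (rule lex_nth)
    show "length (?y T) = length (?x T)" using lx by simp
    show "k - 1 < length (?y T)" using lx FY(4,5) by simp
    show "\<forall>j<k - 1. ?y T ! j = ?x T ! j"
    proof (intro allI impI)
      fix j assume j: "j < k - 1"
      have "?y (Suc T) ! j = ?y T ! j" using FY6 j by simp
      moreover have "?x (Suc T) ! j = ?x T ! j" using FX6 j hk2 by simp
      ultimately show "?y T ! j = ?x T ! j" using z by simp
    qed
    have "?x (Suc T) ! (k - 1) = ?x T ! (k - 1)" using FX6 hk2 FY(4) by simp
    moreover have "?y (Suc T) ! (k - 1) = s' + 1" using FY(2) by simp
    ultimately show "?y T ! (k - 1) < ?x T ! (k - 1)" using z FY1 by simp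
  qed
  then show ?thesis using lex_word[OF dn S CLin T(1) T(3)] by simp
qed

lemma C_right_eq: "d \<le> n \<Longrightarrow> C_right d n = CR d n"
  unfolding C_right_def using lex_unique[OF CR_min CR_facts(1)] by blast

lemma C_left_eq: "d \<le> n \<Longrightarrow> C_left d n = CL d n"
  unfolding C_left_def using lex_unique2[OF CL_max CL_facts(1)] by blast




abbreviation sw :: "nat \<Rightarrow> nat \<Rightarrow> nat" where "sw a \<equiv> Transposition.transpose a (Suc a)"

definition ninv :: "nat \<Rightarrow> (nat \<Rightarrow> nat) \<Rightarrow> (nat \<times> nat) set" where
  "ninv r p = {(x, y). x \<in> {1..r} \<and> y \<in> {1..r} \<and> x < y \<and> inv p y < inv p x}"

lemma finite_ninv: "finite (ninv r p)"
proof -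
  have "ninv r p \<subseteq> {1..r} \<times> {1..r}" by (auto simp: ninv_def)
  then show ?thesis by (rule finite_subset) simp
qed

lemma ninv_id: "ninv r id = {}" by (auto simp: ninv_def)

lemma foldr_comp: "foldr (\<lambda>a f. sw a \<circ> f) w g = foldr (\<lambda>a f. sw a \<circ> f) w id \<circ> g"
  by (induction w) auto

lemma word_prod_Cons: "word_prod (a # w) = sw a \<circ> word_prod w"
  by (simp add: word_prod_def)

lemma word_prod_append: "word_prod (w @ v) = word_prod w \<circ> word_prod v"
  unfolding word_prod_def foldr_append by (rule foldr_comp)

lemma word_prod_snoc: "word_prod (w @ [a]) = word_prod w \<circ> sw a"
  unfolding word_prod_append by (simp add: word_prod_def)

lemma sw_permutes: "a \<in> {1..<r} \<Longrightarrow> sw a permutes {1..r}"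
  by (rule permutes_swap_id) auto

lemma word_permutes: "is_word r w \<Longrightarrow> word_prod w permutes {1..r}"
proof (induction w)
  case Nil then show ?case using permutes_id[of "{1..r}"] by (simp add: word_prod_def id_def)
next
  case (Cons a w)
  then have "word_prod w permutes {1..r}" "sw a permutes {1..r}"
    using sw_permutes by (auto simp: is_word_def)
  then show ?case unfolding word_prod_Cons by (intro permutes_compose)
qed

lemma sw_order:
  assumes "i \<noteq> j" "\<not> (i = a \<and> j = Suc a)" "\<not> (i = Suc a \<and> j = a)"
  shows "sw a j < sw a i \<longleftrightarrow> j < i"
  using assms by (auto simp: transpose_def)

lemma ninv_step:
  assumes p: "p permutes {1..r}" and a: "1 \<le> a" "Suc a \<le> r"
  shows "p a < p (Suc a) \<Longrightarrow> ninv r (p \<circ> sw a) = insert (p a, p (Suc a)) (ninv r p) \<and> (p a, p (Suc a)) \<notin> ninv r p"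
    "p (Suc a) < p a \<Longrightarrow> ninv r (p \<circ> sw a) = ninv r p - {(p (Suc a), p a)} \<and> (p (Suc a), p a) \<in> ninv r p"
proof -
  have bp: "bij p" using p by (rule permutes_bij)
  have inv_c: "inv (p \<circ> sw a) = sw a \<circ> inv p"
    using o_inv_distrib[OF bp bij_transpose] by simp
  let ?P = "inv p"
  have P1: "?P (p a) = a" "?P (p (Suc a)) = Suc a" using p by (simp_all add: permutes_inverses)
  have Pin: "\<And>x. x \<in> {1..r} \<Longrightarrow> ?P x \<in> {1..r}" by (simp only: permutes_in_image[OF permutes_inv[OF p]])
  have pP: "\<And>x. p (?P x) = x" using p by (simp add: permutes_inverses)
  have pa: "p a \<in> {1..r}" "p (Suc a) \<in> {1..r}"
    by (simp_all only: permutes_in_image[OF p]) (use a in auto)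
  have mem: "\<And>x y. (x, y) \<in> ninv r (p \<circ> sw a) \<longleftrightarrow> x \<in> {1..r} \<and> y \<in> {1..r} \<and> x < y \<and> sw a (?P y) < sw a (?P x)"
    by (simp add: ninv_def inv_c)
  have memp: "\<And>x y. (x, y) \<in> ninv r p \<longleftrightarrow> x \<in> {1..r} \<and> y \<in> {1..r} \<and> x < y \<and> ?P y < ?P x"
    by (simp add: ninv_def)
  have Pa: "\<And>x. ?P x = a \<longleftrightarrow> x = p a" using pP P1 by metis
  have Pb: "\<And>x. ?P x = Suc a \<longleftrightarrow> x = p (Suc a)" using pP P1 by metis
  have key: "\<And>x y. x \<noteq> y \<Longrightarrow> \<not> (x = p a \<and> y = p (Suc a)) \<Longrightarrow> \<not> (x = p (Suc a) \<and> y = p a) \<Longrightarrow>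
      (sw a (?P y) < sw a (?P x) \<longleftrightarrow> ?P y < ?P x)"
  proof -
    fix x y assume xy: "x \<noteq> y" "\<not> (x = p a \<and> y = p (Suc a))" "\<not> (x = p (Suc a) \<and> y = p a)"
    have ne: "?P x \<noteq> ?P y" using xy(1) pP by metis
    show "sw a (?P y) < sw a (?P x) \<longleftrightarrow> ?P y < ?P x"
      by (rule sw_order) (use ne xy(2,3) Pa Pb in auto)
  qed
  show "p a < p (Suc a) \<Longrightarrow> ninv r (p \<circ> sw a) = insert (p a, p (Suc a)) (ninv r p) \<and> (p a, p (Suc a)) \<notin> ninv r p"
  proof
    assume lt: "p a < p (Suc a)"
    show "(p a, p (Suc a)) \<notin> ninv r p" using memp P1 by simp
    show "ninv r (p \<circ> sw a) = insert (p a, p (Suc a)) (ninv r p)"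
    proof (rule set_eqI)
      fix z :: "nat \<times> nat" obtain x y where z: "z = (x, y)" by (cases z)
      show "z \<in> ninv r (p \<circ> sw a) \<longleftrightarrow> z \<in> insert (p a, p (Suc a)) (ninv r p)"
      proof (cases "(x = p a \<and> y = p (Suc a)) \<or> (x = p (Suc a) \<and> y = p a) \<or> x = y")
        case True
        then consider (e1) "x = p a \<and> y = p (Suc a)" | (e2) "x = p (Suc a) \<and> y = p a" | (e3) "x = y" by blast
        then show ?thesis
        proof cases
          case e1 then show ?thesis using z mem memp P1 lt pa by simp
        next
          case e2 then show ?thesis using z mem memp P1 lt pa by simp
        next
          case e3 then show ?thesis using z mem memp lt by auto
        qed
      next
        case False
        then show ?thesis using z mem memp key[of x y] by auto
      qed
    qed
  qed
  show "p (Suc a) < p a \<Longrightarrow> ninv r (p \<circ> sw a) = ninv r p - {(p (Suc a), p a)} \<and> (p (Suc a), p a) \<in> ninv r p"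
  proof
    assume lt: "p (Suc a) < p a"
    show "(p (Suc a), p a) \<in> ninv r p" using memp P1 lt pa by simp
    show "ninv r (p \<circ> sw a) = ninv r p - {(p (Suc a), p a)}"
    proof (rule set_eqI)
      fix z :: "nat \<times> nat" obtain x y where z: "z = (x, y)" by (cases z)
      show "z \<in> ninv r (p \<circ> sw a) \<longleftrightarrow> z \<in> ninv r p - {(p (Suc a), p a)}"
      proof (cases "(x = p a \<and> y = p (Suc a)) \<or> (x = p (Suc a) \<and> y = p a) \<or> x = y")
        case True
        then consider (e1) "x = p a \<and> y = p (Suc a)" | (e2) "x = p (Suc a) \<and> y = p a" | (e3) "x = y" by blast
        then show ?thesis
        proof cases
          case e1 then show ?thesis using z mem memp P1 lt pa by simp
        next
          case e2 then show ?thesis using z mem memp P1 lt pa by simp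
        next
          case e3 then show ?thesis using z mem memp lt by auto
        qed
      next
        case False
        then show ?thesis using z mem memp key[of x y] by auto
      qed
    qed
  qed
qed

lemma card_ninv_step:
  assumes p: "p permutes {1..r}" and a: "a \<in> {1..<r}"
  shows "card (ninv r (p \<circ> sw a)) \<le> card (ninv r p) + 1"
    "p a < p (Suc a) \<Longrightarrow> card (ninv r (p \<circ> sw a)) = card (ninv r p) + 1"
    "p (Suc a) < p a \<Longrightarrow> card (ninv r (p \<circ> sw a)) + 1 = card (ninv r p)"
proof -
  have a': "1 \<le> a" "Suc a \<le> r" using a by auto
  have ne: "p a \<noteq> p (Suc a)" using injD[OF permutes_inj[OF p], of a "Suc a"] by auto
  show lt: "p a < p (Suc a) \<Longrightarrow> card (ninv r (p \<circ> sw a)) = card (ninv r p) + 1"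
    using ninv_step(1)[OF p a'] finite_ninv by simp
  show gt: "p (Suc a) < p a \<Longrightarrow> card (ninv r (p \<circ> sw a)) + 1 = card (ninv r p)"
  proof -
    assume "p (Suc a) < p a"
    note N = ninv_step(2)[OF p a' this]
    have c: "card (ninv r p - {(p (Suc a), p a)}) = card (ninv r p) - 1"
      using card_Diff_singleton[OF N[THEN conjunct2]] .
    have "card (ninv r p) > 0" using N finite_ninv card_gt_0_iff by blast
    then show ?thesis using c N by simp
  qed
  show "card (ninv r (p \<circ> sw a)) \<le> card (ninv r p) + 1"
    using lt gt ne by (cases "p a < p (Suc a)") force+
qed

lemma word_len_ge: "is_word r w \<Longrightarrow> card (ninv r (word_prod w)) \<le> length w"
proof (induction w rule: rev_induct)
  case Nil then show ?case by (simp add: word_prod_def ninv_id[unfolded id_def])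
next
  case (snoc a w)
  then have w: "is_word r w" and a: "a \<in> {1..<r}" by (auto simp: is_word_def)
  have "card (ninv r (word_prod w \<circ> sw a)) \<le> card (ninv r (word_prod w)) + 1"
    by (rule card_ninv_step(1)[OF word_permutes[OF w] a])
  moreover have "word_prod (w @ [a]) = word_prod w \<circ> sw a" by (rule word_prod_snoc)
  ultimately have "card (ninv r (word_prod (w @ [a]))) \<le> card (ninv r (word_prod w)) + 1" by (simp only:)
  then show ?case using snoc.IH[OF w] by simp
qed

lemma reduced_of: "is_word r w \<Longrightarrow> length w = card (ninv r (word_prod w)) \<Longrightarrow> reduced r w"
  unfolding reduced_def using word_len_ge by metis

lemma inc_perm_id:
  assumes g: "g permutes {1..r}" and inc: "\<And>a. 1 \<le> a \<Longrightarrow> Suc a \<le> r \<Longrightarrow> g a < g (Suc a)"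
  shows "x \<in> {1..r} \<Longrightarrow> g x = x"
proof -
  have rng: "\<And>x. x \<in> {1..r} \<Longrightarrow> g x \<in> {1..r}" by (simp only: permutes_in_image[OF g])
  have lo: "\<And>x. 1 \<le> x \<Longrightarrow> x \<le> r \<Longrightarrow> x \<le> g x"
  proof -
    fix x show "1 \<le> x \<Longrightarrow> x \<le> r \<Longrightarrow> x \<le> g x"
    proof (induction x)
      case 0 then show ?case by simp
    next
      case (Suc x)
      show ?case
      proof (cases "x = 0")
        case True then show ?thesis using rng[of 1] Suc by auto
      next
        case False
        then have "x \<le> g x" using Suc by simp
        moreover have "g x < g (Suc x)" using inc[of x] False Suc by simp
        ultimately show ?thesis by simp
      qed
    qed
  qed
  have hi: "\<And>k. k < r \<Longrightarrow> g (r - k) \<le> r - k"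
  proof -
    fix k show "k < r \<Longrightarrow> g (r - k) \<le> r - k"
    proof (induction k)
      case 0 then show ?case using rng[of r] by auto
    next
      case (Suc k)
      then have "g (r - k) \<le> r - k" by simp
      moreover have "g (r - Suc k) < g (Suc (r - Suc k))" using inc[of "r - Suc k"] Suc by simp
      moreover have "Suc (r - Suc k) = r - k" using Suc by simp
      ultimately show ?case by simp
    qed
  qed
  assume x: "x \<in> {1..r}"
  then have "g (r - (r - x)) \<le> r - (r - x)" using hi[of "r - x"] by simp
  then have "g x \<le> x" using x by simp
  then show "g x = x" using lo x by (simp add: le_antisym)
qed

lemma ninv_key:
  assumes u: "u permutes {1..r}" and v: "v permutes {1..r}" and sub: "ninv r u \<subseteq> ninv r v" and ne: "u \<noteq> v"
  shows "\<exists>a\<in>{1..<r}. u a < u (Suc a) \<and> (u a, u (Suc a)) \<in> ninv r v"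
proof (rule ccontr)
  assume H: "\<not> ?thesis"
  define g where "g = inv v \<circ> u"
  have g: "g permutes {1..r}" unfolding g_def by (rule permutes_compose[OF u permutes_inv[OF v]])
  have "g a < g (Suc a)" if a: "1 \<le> a" "Suc a \<le> r" for a
  proof -
    have ua: "u a \<in> {1..r}" "u (Suc a) \<in> {1..r}"
      by (simp_all only: permutes_in_image[OF u]) (use a in auto)
    have une: "u a \<noteq> u (Suc a)" using injD[OF permutes_inj[OF u], of a "Suc a"] by auto
    have gne: "g a \<noteq> g (Suc a)" unfolding g_def using une permutes_inj[OF permutes_inv[OF v]]
      by (metis comp_apply injD)
    show ?thesis
    proof (cases "u a < u (Suc a)")
      case True
      then have "(u a, u (Suc a)) \<notin> ninv r v" using H a by auto
      then have "\<not> inv v (u (Suc a)) < inv v (u a)" using ua True by (simp add: ninv_def)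
      then show ?thesis using gne by (simp add: g_def)
    next
      case False
      then have lt: "u (Suc a) < u a" using une by simp
      have "inv u (u a) = a" "inv u (u (Suc a)) = Suc a" using u by (simp_all add: permutes_inverses)
      then have "(u (Suc a), u a) \<in> ninv r u" using ua lt by (simp add: ninv_def)
      then have "(u (Suc a), u a) \<in> ninv r v" using sub by auto
      then show ?thesis by (simp add: ninv_def g_def)
    qed
  qed
  then have gid: "\<And>x. x \<in> {1..r} \<Longrightarrow> g x = x" using inc_perm_id[OF g] by blast
  have "u = v"
  proof
    fix x show "u x = v x"
    proof (cases "x \<in> {1..r}")
      case True
      then have "inv v (u x) = x" using gid by (simp add: g_def)
      then show ?thesis using v by (metis permutes_inverses(1))
    next
      case False then show ?thesis using u v by (simp add: permutes_not_in)
    qed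
  qed
  then show False using ne by simp
qed

lemma path:
  assumes "u permutes {1..r}" "v permutes {1..r}" "ninv r u \<subseteq> ninv r v"
  shows "\<exists>w. is_word r w \<and> length w = card (ninv r v) - card (ninv r u) \<and> u \<circ> word_prod w = v"
  using assms
proof (induction "card (ninv r v) - card (ninv r u)" arbitrary: u)
  case 0
  then have "card (ninv r v) \<le> card (ninv r u)" by simp
  then have "ninv r u = ninv r v" using card_seteq[OF finite_ninv 0(4)] by simp
  have "u = v"
  proof (rule ccontr)
    assume "u \<noteq> v"
    then obtain a where a: "a \<in> {1..<r}" "u a < u (Suc a)" "(u a, u (Suc a)) \<in> ninv r v"
      using ninv_key[OF 0(2,3,4)] by blast
    have "(u a, u (Suc a)) \<notin> ninv r u" using ninv_step(1)[OF 0(2)] a by auto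
    then show False using a \<open>ninv r u = ninv r v\<close> by simp
  qed
  then show ?case by (intro exI[of _ "[]"]) (simp add: is_word_def word_prod_def)
next
  case (Suc N)
  have "u \<noteq> v" using Suc(2) by auto
  then obtain a where a: "a \<in> {1..<r}" "u a < u (Suc a)" "(u a, u (Suc a)) \<in> ninv r v"
    using ninv_key[OF Suc(3,4,5)] by blast
  have a': "1 \<le> a" "Suc a \<le> r" using a by auto
  note st = ninv_step(1)[OF Suc(3) a' a(2)]
  let ?u = "u \<circ> sw a"
  have u': "?u permutes {1..r}" using permutes_compose[OF sw_permutes[OF a(1)] Suc(3)] .
  have sub': "ninv r ?u \<subseteq> ninv r v" using st Suc(5) a(3) by auto
  have c: "card (ninv r ?u) = card (ninv r u) + 1" using card_ninv_step(2)[OF Suc(3) a(1) a(2)] .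
  have "N = card (ninv r v) - card (ninv r ?u)" using Suc(2) c by simp
  then obtain w where w: "is_word r w" "length w = card (ninv r v) - card (ninv r ?u)" "?u \<circ> word_prod w = v"
    using Suc(1)[OF _ u' Suc(4) sub'] by blast
  have "card (ninv r ?u) \<le> card (ninv r v)" using card_mono[OF finite_ninv sub'] .
  then show ?case using w a c Suc(2)
    by (intro exI[of _ "a # w"]) (auto simp: is_word_def word_prod_Cons o_assoc)
qed

lemma mono_prefix:
  assumes "is_word r w" "length w = card (ninv r (word_prod w))" "k \<le> length w"
  shows "ninv r (word_prod (take k w)) \<subseteq> ninv r (word_prod w)"
  using assms
proof (induction w arbitrary: k rule: rev_induct)
  case Nil then show ?case by simp
next
  case (snoc a w)
  then have w: "is_word r w" and a: "a \<in> {1..<r}" by (auto simp: is_word_def)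
  note pw = word_permutes[OF w]
  have L: "card (ninv r (word_prod w)) \<le> length w" by (rule word_len_ge[OF w])
  have E0: "length (w @ [a]) = card (ninv r (word_prod w \<circ> sw a))" using snoc(3) by (simp only: word_prod_snoc)
  have E: "card (ninv r (word_prod w \<circ> sw a)) = length w + 1" using E0 length_append_singleton[of w a] by linarith
  have ne: "word_prod w a \<noteq> word_prod w (Suc a)" using injD[OF permutes_inj[OF pw], of a "Suc a"] by auto
  have asc: "word_prod w a < word_prod w (Suc a)"
  proof (rule ccontr)
    assume "\<not> ?thesis"
    then have "word_prod w (Suc a) < word_prod w a" using ne by simp
    then have "card (ninv r (word_prod w \<circ> sw a)) + 1 = card (ninv r (word_prod w))"
      by (rule card_ninv_step(3)[OF pw a])
    then show False using E L by simp
  qed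
  have c1: "card (ninv r (word_prod w)) = length w"
    using card_ninv_step(2)[OF pw a asc] E by simp
  have sub: "ninv r (word_prod w) \<subseteq> ninv r (word_prod (w @ [a]))"
    using ninv_step(1)[OF pw _ _ asc] a by (auto simp: word_prod_snoc)
  show ?case
  proof (cases "k \<le> length w")
    case True
    have "ninv r (word_prod (take k w)) \<subseteq> ninv r (word_prod w)" by (rule snoc(1)[OF w c1[symmetric] True])
    then show ?thesis using sub True by auto
  next
    case False
    then have "k = length w + 1" using snoc(4) by simp
    then show ?thesis by simp
  qed
qed




definition pos :: "nat \<Rightarrow> nat \<Rightarrow> row set \<Rightarrow> nat \<times> nat \<Rightarrow> nat" where
  "pos d n S a = inv_into {1..d * (n - d)} (step_pair d n S) a"

context
  fixes d n :: nat
  assumes dn: "d \<le> n"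
begin

lemma pos_props:
  assumes S: "S \<in> Cset d n" and a: "a \<in> Adm d n"
  shows "pos d n S a \<in> {1..d * (n - d)}" "step_pair d n S (pos d n S a) = a"
proof -
  have B: "bij_betw (step_pair d n S) {1..d * (n - d)} (Adm d n)" by (rule step_bij[OF dn S])
  have aim: "a \<in> step_pair d n S ` {1..d * (n - d)}" using B a by (simp add: bij_betw_def)
  show "pos d n S a \<in> {1..d * (n - d)}" "step_pair d n S (pos d n S a) = a"
    unfolding pos_def using inv_into_into[OF aim] f_inv_into_f[OF aim] by auto
qed

lemma pos_step:
  assumes S: "S \<in> Cset d n" and t: "t \<in> {1..d * (n - d)}"
  shows "pos d n S (step_pair d n S t) = t"
  unfolding pos_def using inv_into_f_f[OF step_inj[OF dn S] t] .

lemma sigma_formula: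
  assumes S: "S \<in> Cset d n" and t: "t \<in> {1..d * (n - d)}"
  shows "sigma d n S t = lamR d n (step_pair d n S t)"
proof -
  let ?p = "step_pair d n S t"
  have pA: "?p \<in> Adm d n" using step_pair_spec(1)[OF dn S] t by simp
  have "(THE u. u \<in> {1..d * (n - d)} \<and> step_pair d n (C_right d n) u = ?p) = lamR d n ?p"
  proof (rule the_equality)
    have r: "lamR d n ?p \<in> {1..d * (n - d)}" by (rule lamR_range[OF pA])
    have "step_pair d n (C_right d n) (lamR d n ?p) = inv_into (Adm d n) (lamR d n) (lamR d n ?p)"
      using C_right_eq[OF dn] CR_facts(3)[OF dn r] by simp
    also have "\<dots> = ?p" using inv_into_f_f[OF lamR_inj pA] .
    finally show "lamR d n ?p \<in> {1..d * (n - d)} \<and> step_pair d n (C_right d n) (lamR d n ?p) = ?p"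
      using r by simp
  next
    fix u assume u: "u \<in> {1..d * (n - d)} \<and> step_pair d n (C_right d n) u = ?p"
    then have u1: "u \<in> {1..d * (n - d)}" by simp
    have "step_pair d n (C_right d n) u = inv_into (Adm d n) (lamR d n) u"
      using C_right_eq[OF dn] CR_facts(3)[OF dn u1] by simp
    then have "inv_into (Adm d n) (lamR d n) u = ?p" using u by simp
    then show "u = lamR d n ?p" using lam_eq_iff[OF dn good_lamR pA u1] by simp
  qed
  then show ?thesis using t by (simp add: sigma_def)
qed

lemma sigma_out: assumes "t \<notin> {1..d * (n - d)}" shows "sigma d n S t = t"
  unfolding sigma_def using assms by (rule if_not_P)

lemma sigma_permutes:
  assumes S: "S \<in> Cset d n"
  shows "sigma d n S permutes {1..d * (n - d)}"
proof (rule bij_imp_permutes)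
  have B: "bij_betw (lamR d n \<circ> step_pair d n S) {1..d * (n - d)} {1..d * (n - d)}"
    by (rule bij_betw_trans[OF step_bij[OF dn S] bij_from_inj[OF lamR_inj lamR_range]])
  show "bij_betw (sigma d n S) {1..d * (n - d)} {1..d * (n - d)}"
    using B by (rule bij_betw_cong[THEN iffD1, rotated]) (simp add: sigma_formula[OF S])
  show "\<And>x. x \<notin> {1..d * (n - d)} \<Longrightarrow> sigma d n S x = x" by (rule sigma_out)
qed

lemma inv_sigma:
  assumes S: "S \<in> Cset d n" and a: "a \<in> Adm d n"
  shows "inv (sigma d n S) (lamR d n a) = pos d n S a"
proof -
  have "sigma d n S (pos d n S a) = lamR d n a"
    using sigma_formula[OF S pos_props(1)[OF S a]] pos_props(2)[OF S a] by simp
  then show ?thesis using permutes_inverses(2)[OF sigma_permutes[OF S]] by metis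
qed

lemma pos_CL:
  assumes a: "a \<in> Adm d n"
  shows "pos d n (CL d n) a = lamL d n a"
proof -
  have r: "lamL d n a \<in> {1..d * (n - d)}" by (rule lamL_range[OF a])
  have "step_pair d n (CL d n) (lamL d n a) = a"
    using CL_facts(3)[OF dn r] inv_into_f_f[OF lamL_inj a] by simp
  then show ?thesis using pos_step[OF CL_facts(1)[OF dn] r] by simp
qed

lemma ninv_in_max:
  assumes S: "S \<in> Cset d n"
  shows "ninv (d * (n - d)) (sigma d n S) \<subseteq> ninv (d * (n - d)) (sigma d n (C_left d n))"
proof
  let ?r = "d * (n - d)"
  note CLin = CL_facts(1)[OF dn]
  fix z assume z: "z \<in> ninv ?r (sigma d n S)"
  obtain x y where xy: "z = (x, y)" by (cases z)
  have x: "x \<in> {1..?r}" and y: "y \<in> {1..?r}" and lt: "x < y"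
    and iv: "inv (sigma d n S) y < inv (sigma d n S) x" using z xy by (auto simp: ninv_def)
  define a where "a = inv_into (Adm d n) (lamR d n) x"
  define b where "b = inv_into (Adm d n) (lamR d n) y"
  have a: "a \<in> Adm d n" "lamR d n a = x" using qq_props[OF dn good_lamR x] a_def by auto
  have b: "b \<in> Adm d n" "lamR d n b = y" using qq_props[OF dn good_lamR y] b_def by auto
  have pba: "pos d n S b < pos d n S a" using iv inv_sigma[OF S a(1)] inv_sigma[OF S b(1)] a b by simp
  have "lamL d n b < lamL d n a"
  proof (rule ccontr)
    assume "\<not> ?thesis"
    moreover have "lamL d n a \<noteq> lamL d n b" using inj_onD[OF lamL_inj _ a(1) b(1)] a b lt by auto
    ultimately have "lamL d n a < lamL d n b" by simp
    then have "prec a b" using twodim[OF a(1) b(1)] a b lt by simp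
    then have "pos d n S a < pos d n S b"
      using chain_prec[OF dn S, of "pos d n S a" "pos d n S b"] pos_props[OF S a(1)] pos_props[OF S b(1)] by auto
    then show False using pba by simp
  qed
  then have "inv (sigma d n (CL d n)) y < inv (sigma d n (CL d n)) x"
    using inv_sigma[OF CLin a(1)] inv_sigma[OF CLin b(1)] pos_CL[OF a(1)] pos_CL[OF b(1)] a b by simp
  then show "z \<in> ninv ?r (sigma d n (C_left d n))" using x y lt xy C_left_eq[OF dn] by (simp add: ninv_def)
qed

lemma chain_of_perm:
  assumes p: "p permutes {1..d * (n - d)}"
    and sub: "ninv (d * (n - d)) p \<subseteq> ninv (d * (n - d)) (sigma d n (C_left d n))"
  shows "\<exists>S\<in>Cset d n. sigma d n S = p"
proof -
  let ?r = "d * (n - d)"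
  note CLin = CL_facts(1)[OF dn]
  define lam where "lam = inv p \<circ> lamR d n"
  have ip: "inv p permutes {1..?r}" by (rule permutes_inv[OF p])
  have G: "good_lam d n lam"
    unfolding good_lam_def
  proof (intro conjI ballI impI)
    show "bij_betw lam (Adm d n) {1..?r}" unfolding lam_def
      by (rule bij_betw_trans[OF bij_from_inj[OF lamR_inj lamR_range] permutes_imp_bij[OF ip]])
    fix a b assume a: "a \<in> Adm d n" and b: "b \<in> Adm d n" and pr: "prec a b"
    have R: "lamR d n a < lamR d n b" using good_lamR a b pr by (auto simp: good_lam_def)
    have L: "lamL d n a < lamL d n b" using good_lamL a b pr by (auto simp: good_lam_def)
    have ra: "lamR d n a \<in> {1..?r}" "lamR d n b \<in> {1..?r}" using lamR_range a b by auto
    have ne: "inv p (lamR d n a) \<noteq> inv p (lamR d n b)"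
      using R permutes_inverses(1)[OF p] by (metis less_irrefl)
    show "lam a < lam b"
    proof (rule ccontr)
      assume "\<not> lam a < lam b"
      then have "inv p (lamR d n b) < inv p (lamR d n a)" using ne by (simp add: lam_def)
      then have "(lamR d n a, lamR d n b) \<in> ninv ?r p" using ra R by (simp add: ninv_def)
      then have "(lamR d n a, lamR d n b) \<in> ninv ?r (sigma d n (CL d n))" using sub C_left_eq[OF dn] by auto
      then have "inv (sigma d n (CL d n)) (lamR d n b) < inv (sigma d n (CL d n)) (lamR d n a)"
        by (simp add: ninv_def)
      then have "lamL d n b < lamL d n a"
        using inv_sigma[OF CLin a] inv_sigma[OF CLin b] pos_CL[OF a] pos_CL[OF b] by simp
      then show False using L by simp
    qed
  qed
  define S where "S = rows_of d n lam ` {0..?r}"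
  have S: "S \<in> Cset d n" using chain_of_lam(1)[OF dn G] S_def by simp
  have st: "\<And>t. t \<in> {1..?r} \<Longrightarrow> step_pair d n S t = inv_into (Adm d n) lam t"
    using chain_of_lam(3)[OF dn G] S_def by simp
  have "sigma d n S = p"
  proof
    fix t show "sigma d n S t = p t"
    proof (cases "t \<in> {1..?r}")
      case True
      let ?a = "inv_into (Adm d n) lam t"
      have A: "?a \<in> Adm d n" "lam ?a = t" using qq_props[OF dn G True] by auto
      then have "inv p (lamR d n ?a) = t" by (simp add: lam_def)
      then have "lamR d n ?a = p t" using permutes_inverses(1)[OF p] by metis
      then show ?thesis using sigma_formula[OF S True] st[OF True] by simp
    next
      case False then show ?thesis using sigma_out permutes_not_in[OF p] by simp
    qed
  qed
  then show ?thesis using S by blast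
qed

end




lemma weakA:
  assumes p: "p permutes {1..r}" and q: "q permutes {1..r}" and sub: "ninv r p \<subseteq> ninv r q"
  shows "weak_le r id p \<and> weak_le r p q"
proof -
  obtain w1 where w1: "is_word r w1" "length w1 = card (ninv r p) - card (ninv r id)" "id \<circ> word_prod w1 = p"
    using path[OF permutes_id p] ninv_id by (metis empty_subsetI)
  have w1': "length w1 = card (ninv r p)" "word_prod w1 = p" using w1 ninv_id by auto
  obtain w2 where w2: "is_word r w2" "length w2 = card (ninv r q) - card (ninv r p)" "p \<circ> word_prod w2 = q"
    using path[OF p q sub] by blast
  have cle: "card (ninv r p) \<le> card (ninv r q)" by (rule card_mono[OF finite_ninv sub])
  let ?w = "w1 @ w2"
  have W: "is_word r ?w" using w1 w2 by (simp add: is_word_def)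
  have P: "word_prod ?w = q" using w1' w2 by (simp add: word_prod_append)
  have L: "length ?w = card (ninv r (word_prod ?w))" using w1' w2 cle P by simp
  have R: "reduced r ?w" by (rule reduced_of[OF W L])
  have R1: "reduced r w1" using reduced_of[OF w1(1)] w1' by simp
  have R0: "reduced r []" by (simp add: reduced_def is_word_def)
  have "weak_le r p q" unfolding weak_le_def
    using R P R1 w1' by (intro exI[of _ ?w] exI[of _ "length w1"]) simp
  moreover have "weak_le r id p" unfolding weak_le_def
    using R1 w1' R0 by (intro exI[of _ w1] exI[of _ 0]) (simp add: word_prod_def id_def)
  ultimately show ?thesis by simp
qed

lemma weakB:
  assumes q: "q permutes {1..r}" and wl: "weak_le r p q"
  shows "ninv r p \<subseteq> ninv r q"
proof -
  obtain w k where w: "reduced r w" "word_prod w = q" "k \<le> length w" "reduced r (take k w)"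
    "word_prod (take k w) = p" using wl unfolding weak_le_def by blast
  obtain w0 where w0: "is_word r w0" "length w0 = card (ninv r q) - card (ninv r id)" "id \<circ> word_prod w0 = q"
    using path[OF permutes_id q] ninv_id by (metis empty_subsetI)
  have w0': "length w0 = card (ninv r q)" "word_prod w0 = q" using w0 ninv_id by auto
  have iw: "is_word r w" using w(1) by (simp add: reduced_def)
  have "length w \<le> length w0" using w(1) w0(1) w0' w(2) unfolding reduced_def by metis
  moreover have "card (ninv r q) \<le> length w" using word_len_ge[OF iw] w(2) by simp
  ultimately have "length w = card (ninv r (word_prod w))" using w0' w(2) by simp
  from mono_prefix[OF iw this w(3)] show ?thesis using w by simp
qed

lemma swap_bij:
  assumes f: "bij_betw f A B" and g: "bij_betw g A B" and t: "t \<in> A" "Suc t \<in> A"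
    and agree: "\<And>u. u \<in> A \<Longrightarrow> u \<noteq> t \<Longrightarrow> u \<noteq> Suc t \<Longrightarrow> g u = f u"
    and ne: "g t \<noteq> f t"
  shows "g t = f (Suc t)" "g (Suc t) = f t"
proof -
  have fi: "inj_on f A" and gi: "inj_on g A" using f g by (auto simp: bij_betw_def)
  have "g t \<in> f ` A" using f g t by (auto simp: bij_betw_def)
  then obtain u where u: "u \<in> A" "g t = f u" by auto
  have "u \<noteq> t" using u ne by auto
  moreover have "u = t \<or> u = Suc t"
  proof (rule ccontr)
    assume nu: "\<not> (u = t \<or> u = Suc t)"
    then have "g u = f u" using agree u by auto
    then have "g t = g u" using u by simp
    then have "t = u" using inj_onD[OF gi _ t(1) u(1)] by simp
    then show False using nu by simp
  qed
  ultimately have gt: "u = Suc t" by simp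
  then show "g t = f (Suc t)" using u by simp
  have "g (Suc t) \<in> f ` A" using f g t by (auto simp: bij_betw_def)
  then obtain v where v: "v \<in> A" "g (Suc t) = f v" by auto
  have "v \<noteq> Suc t"
  proof
    assume "v = Suc t"
    then have "g (Suc t) = g t" using v u gt by simp
    then show False using inj_onD[OF gi _ t(2) t(1)] by simp
  qed
  moreover have "v = t \<or> v = Suc t"
  proof (rule ccontr)
    assume nv: "\<not> (v = t \<or> v = Suc t)"
    then have "g v = f v" using agree v by auto
    then have "g (Suc t) = g v" using v by simp
    then have "Suc t = v" using inj_onD[OF gi _ t(2) v(1)] by simp
    then show False using nv by simp
  qed
  ultimately show "g (Suc t) = f t" using v by auto
qed




context
  fixes d n :: nat
  assumes dn: "d \<le> n"
begin

lemma sigma_inj: "inj_on (sigma d n) (Cset d n)"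
proof (rule inj_onI)
  let ?r = "d * (n - d)"
  fix S1 S2 assume S1: "S1 \<in> Cset d n" and S2: "S2 \<in> Cset d n" and e: "sigma d n S1 = sigma d n S2"
  have st: "step_pair d n S1 t = step_pair d n S2 t" if t: "t \<in> {1..?r}" for t
  proof -
    have "lamR d n (step_pair d n S1 t) = lamR d n (step_pair d n S2 t)"
      using sigma_formula[OF dn S1 t] sigma_formula[OF dn S2 t] e by simp
    then show ?thesis
      using inj_onD[OF lamR_inj] step_pair_spec(1)[OF dn S1] step_pair_spec(1)[OF dn S2] t by auto
  qed
  have ce: "u \<le> ?r \<Longrightarrow> chain_elem S1 u = chain_elem S2 u" for u
  proof (induction u)
    case 0 then show ?case using valid_of_chain(1)[OF dn S1] valid_of_chain(1)[OF dn S2]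
      by (simp add: valid_rows_def)
  next
    case (Suc u)
    obtain s h where p: "step_pair d n S1 (Suc u) = (s, h)" by (cases "step_pair d n S1 (Suc u)")
    have p2: "step_pair d n S2 (Suc u) = (s, h)" using p st[of "Suc u"] Suc(2) by simp
    have t: "1 \<le> Suc u" "Suc u \<le> ?r" using Suc by auto
    show ?case using step_facts(6)[OF dn S1 t p] step_facts(6)[OF dn S2 t p2] Suc by simp
  qed
  show "S1 = S2" using valid_of_chain(2)[OF dn S1] valid_of_chain(2)[OF dn S2] ce
    by (metis atLeastAtMost_iff image_cong)
qed

lemma swap_sigma:
  assumes S: "S \<in> Cset d n" and t: "1 \<le> t" "Suc t \<le> d * (n - d)" and fe: "four_elem d n S t"
  shows "sigma d n (insert (other_mid d n S t) (S - {chain_elem S t})) = sigma d n S \<circ> Transposition.transpose t (Suc t)"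
proof -
  let ?r = "d * (n - d)"
  let ?x = "chain_elem S"
  let ?a = "?x (t - 1)" and ?b = "?x t" and ?c = "?x (Suc t)"
  define I where "I = bruhat_interval d n ?a ?c"
  have ce: "\<And>u. u \<le> ?r \<Longrightarrow> ?x u \<in> S \<and> row_len (?x u) = u" using valid_of_chain(3)[OF dn S] .
  have CI: "\<And>u. u \<le> ?r \<Longrightarrow> ?x u \<in> Irows d n" using chain_Irows[OF dn S] .
  have la: "row_len ?a = t - 1" and lb: "row_len ?b = t" and lc: "row_len ?c = Suc t" using ce t by auto
  have aI: "?a \<in> Irows d n" and bI: "?b \<in> Irows d n" and cI: "?c \<in> Irows d n" using CI t by auto
  have mab: "row_le ?a ?b" and mbc: "row_le ?b ?c" and mac: "row_le ?a ?c"
    using chain_mono[OF dn S] t by auto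
  have abc: "{?a, ?b, ?c} \<subseteq> I" using aI bI cI mab mbc mac row_le_refl
    by (auto simp: I_def bruhat_interval_def)
  have c4: "card I = 4" using fe by (simp add: four_elem_def I_def)
  then have finI: "finite I" by (metis card.infinite zero_neq_numeral)
  have dist: "?a \<noteq> ?b" "?b \<noteq> ?c" "?a \<noteq> ?c" using la lb lc t by auto
  have c3: "card {?a, ?b, ?c} = 3" using dist by simp
  have "card (I - {?a, ?b, ?c}) = 1" using card_Diff_subset[OF _ abc] c4 c3 by simp
  then obtain y where Y: "I - {?a, ?b, ?c} = {y}" using card_1_singleton_iff by (metis One_nat_def)
  have om: "other_mid d n S t = y"
    unfolding other_mid_def using Y by (simp add: I_def)
  have yI: "y \<in> Irows d n" and ay: "row_le ?a y" and yc: "row_le y ?c" and yne: "y \<noteq> ?a" "y \<noteq> ?b" "y \<noteq> ?c"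
    using Y by (auto simp: I_def bruhat_interval_def)
  have "t - 1 < row_len y" using row_le_less[OF aI yI ay] yne la by simp
  moreover have "row_len y < Suc t" using row_le_less[OF yI cI yc] yne lc by simp
  ultimately have ly: "row_len y = t" using t by simp
  obtain s1 h1 c1 where c1: "root_op s1 h1 ?a = Some c1" "c1 \<in> Irows d n" "row_le c1 y"
    using cover[OF aI yI ay] yne by metis
  have "row_len c1 = t" using root_op_props(3)[OF aI c1(1)] la t by simp
  then have "c1 = y" using row_le_len_eq[OF c1(2) yI c1(3)] ly by simp
  then have ray: "root_op s1 h1 ?a = Some y" using c1 by simp
  obtain s2 h2 c2 where c2: "root_op s2 h2 y = Some c2" "c2 \<in> Irows d n" "row_le c2 ?c"
    using cover[OF yI cI yc] yne by metis
  have "row_len c2 = Suc t" using root_op_props(3)[OF yI c2(1)] ly by simp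
  then have "c2 = ?c" using row_le_len_eq[OF c2(2) cI c2(3)] lc by simp
  then have ryc: "root_op s2 h2 y = Some ?c" using c2 by simp
  define x' where "x' = ?x(t := y)"
  have V: "valid_rows d n ?x" using valid_of_chain(1)[OF dn S] .
  have V': "valid_rows d n x'"
    unfolding valid_rows_def
  proof (intro conjI allI impI)
    show "x' 0 = rmin d" using V t by (simp add: x'_def valid_rows_def)
    fix u assume "u \<le> ?r" then show "x' u \<in> Irows d n" using CI yI by (simp add: x'_def)
  next
    fix u assume u: "u < ?r"
    show "\<exists>s h. root_op s h (x' u) = Some (x' (Suc u))"
    proof (cases "Suc u = t")
      case True
      then have "x' u = ?a" "x' (Suc u) = y" using t by (auto simp: x'_def)
      then show ?thesis using ray by metis
    next
      case False
      show ?thesis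
      proof (cases "u = t")
        case True then show ?thesis using ryc by (auto simp: x'_def)
      next
        case False
        then show ?thesis using V u \<open>Suc u \<noteq> t\<close> by (simp add: x'_def valid_rows_def)
      qed
    qed
  qed
  have inj: "\<And>u v. u \<le> ?r \<Longrightarrow> v \<le> ?r \<Longrightarrow> ?x u = ?x v \<Longrightarrow> u = v" using ce by metis
  have S'eq: "insert (other_mid d n S t) (S - {chain_elem S t}) = x' ` {0..?r}"
  proof -
    have "x' ` {0..?r} = insert (x' t) (x' ` ({0..?r} - {t}))" using t by auto
    also have "x' ` ({0..?r} - {t}) = ?x ` ({0..?r} - {t})" by (auto simp: x'_def)
    also have "?x ` ({0..?r} - {t}) = S - {?b}"
    proof
      show "?x ` ({0..?r} - {t}) \<subseteq> S - {?b}" using ce inj t by fastforce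
      show "S - {?b} \<subseteq> ?x ` ({0..?r} - {t})"
      proof
        fix z assume z: "z \<in> S - {?b}"
        then obtain u where "u \<le> ?r" "z = ?x u" using valid_of_chain(2)[OF dn S] by (metis DiffD1 atLeastAtMost_iff imageE)
        moreover then have "u \<noteq> t" using z by auto
        ultimately show "z \<in> ?x ` ({0..?r} - {t})" by auto
      qed
    qed
    finally show ?thesis using om by (simp add: x'_def)
  qed
  define S' where "S' = x' ` {0..?r}"
  have S': "S' \<in> Cset d n" using chain_of_valid(1)[OF V'] S'_def by simp
  have ce': "\<And>u. u \<le> ?r \<Longrightarrow> chain_elem S' u = x' u" using chain_of_valid(2)[OF V'] S'_def by simp
  have agree: "\<And>u. u \<in> {1..?r} \<Longrightarrow> u \<noteq> t \<Longrightarrow> u \<noteq> Suc t \<Longrightarrow> step_pair d n S' u = step_pair d n S u"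
  proof -
    fix u assume u: "u \<in> {1..?r}" "u \<noteq> t" "u \<noteq> Suc t"
    have "u - 1 \<noteq> t" using u by auto
    then have "chain_elem S' (u - 1) = ?x (u - 1)" "chain_elem S' u = ?x u"
      using ce' u by (auto simp: x'_def)
    then show "step_pair d n S' u = step_pair d n S u" by (simp add: step_pair_def)
  qed
  have tt: "t \<in> {1..?r}" "Suc t \<in> {1..?r}" using t by auto
  have ne: "step_pair d n S' t \<noteq> step_pair d n S t"
  proof
    assume e: "step_pair d n S' t = step_pair d n S t"
    have "t - 1 \<noteq> t" "t - 1 \<le> ?r" "t \<le> ?r" using t by auto
    then have e1: "chain_elem S' (t - 1) = ?a" "chain_elem S' t = y" using ce' by (auto simp: x'_def)
    have "root_op (fst (step_pair d n S t)) (snd (step_pair d n S t)) ?a = Some y"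
      using step_pair_spec(2)[OF dn S' t(1)] e e1 t by simp
    moreover have "root_op (fst (step_pair d n S t)) (snd (step_pair d n S t)) ?a = Some ?b"
      using step_pair_spec(2)[OF dn S t(1)] t by simp
    ultimately show False using yne by simp
  qed
  note SW = swap_bij[OF step_bij[OF dn S] step_bij[OF dn S'] tt agree ne]
  have "sigma d n S' = sigma d n S \<circ> Transposition.transpose t (Suc t)"
  proof
    fix u
    show "sigma d n S' u = (sigma d n S \<circ> Transposition.transpose t (Suc t)) u"
    proof (cases "u \<in> {1..?r}")
      case True
      have sw: "Transposition.transpose t (Suc t) u \<in> {1..?r}" using True tt by (auto simp: transpose_def)
      have "step_pair d n S' u = step_pair d n S (Transposition.transpose t (Suc t) u)"
        using SW agree[OF True] by (auto simp: transpose_def)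
      then show ?thesis using sigma_formula[OF dn S' True] sigma_formula[OF dn S sw] by simp
    next
      case False
      then have "Transposition.transpose t (Suc t) u = u" using tt by (auto simp: transpose_def)
      then show ?thesis using sigma_out[OF dn False] by simp
    qed
  qed
  then show ?thesis using S'eq S'_def by simp
qed

end




theorem theorem2p32:
  fixes d n r :: nat
  assumes "1 \<le> d" and "d < n" and "r = d * (n - d)"
  shows "bij_betw (sigma d n) (Cset d n)
           {\<sigma>. \<sigma> permutes {1..r} \<and> weak_le r id \<sigma> \<and> weak_le r \<sigma> (sigma d n (C_left d n))}
         \<and> (\<forall>t C. 1 \<le> t \<and> t \<le> r - 1 \<and> C \<in> Cset d n \<longrightarrow>
              (\<forall>C'. E_op d n t C = Some C' \<longrightarrow>
                   sigma d n C' = sigma d n C \<circ> Transposition.transpose t (Suc t)) \<and>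
              (\<forall>C'. F_op d n t C = Some C' \<longrightarrow>
                   sigma d n C' = sigma d n C \<circ> Transposition.transpose t (Suc t)))"
proof -
  have dn: "d \<le> n" using assms by simp
  let ?max = "sigma d n (C_left d n)"
  have CLin: "C_left d n \<in> Cset d n" using C_left_eq[OF dn] CL_facts(1)[OF dn] by simp
  have pmax: "?max permutes {1..r}" using sigma_permutes[OF dn CLin] assms(3) by simp
  have part1: "bij_betw (sigma d n) (Cset d n)
           {\<sigma>. \<sigma> permutes {1..r} \<and> weak_le r id \<sigma> \<and> weak_le r \<sigma> ?max}"
    unfolding bij_betw_def
  proof
    show "inj_on (sigma d n) (Cset d n)" by (rule sigma_inj[OF dn])
    show "sigma d n ` Cset d n = {\<sigma>. \<sigma> permutes {1..r} \<and> weak_le r id \<sigma> \<and> weak_le r \<sigma> ?max}"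
    proof (intro equalityI subsetI)
      fix \<sigma> assume "\<sigma> \<in> sigma d n ` Cset d n"
      then obtain S where S: "S \<in> Cset d n" "\<sigma> = sigma d n S" by auto
      have p: "\<sigma> permutes {1..r}" using sigma_permutes[OF dn S(1)] S(2) assms(3) by simp
      have "ninv r \<sigma> \<subseteq> ninv r ?max" using ninv_in_max[OF dn S(1)] S(2) assms(3) by simp
      then show "\<sigma> \<in> {\<sigma>. \<sigma> permutes {1..r} \<and> weak_le r id \<sigma> \<and> weak_le r \<sigma> ?max}"
        using weakA[OF p pmax] p by simp
    next
      fix \<sigma> assume "\<sigma> \<in> {\<sigma>. \<sigma> permutes {1..r} \<and> weak_le r id \<sigma> \<and> weak_le r \<sigma> ?max}"
      then have p: "\<sigma> permutes {1..r}" and w: "weak_le r \<sigma> ?max" by auto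
      have "ninv r \<sigma> \<subseteq> ninv r ?max" by (rule weakB[OF pmax w])
      then obtain S where "S \<in> Cset d n" "sigma d n S = \<sigma>" using chain_of_perm[OF dn] p assms(3) by blast
      then show "\<sigma> \<in> sigma d n ` Cset d n" by force
    qed
  qed
  have part2: "\<forall>t C. 1 \<le> t \<and> t \<le> r - 1 \<and> C \<in> Cset d n \<longrightarrow>
              (\<forall>C'. E_op d n t C = Some C' \<longrightarrow>
                   sigma d n C' = sigma d n C \<circ> Transposition.transpose t (Suc t)) \<and>
              (\<forall>C'. F_op d n t C = Some C' \<longrightarrow>
                   sigma d n C' = sigma d n C \<circ> Transposition.transpose t (Suc t))"
  proof (intro allI impI conjI)
    fix t C assume H: "1 \<le> t \<and> t \<le> r - 1 \<and> C \<in> Cset d n"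
    then have t: "1 \<le> t" "Suc t \<le> d * (n - d)" and C: "C \<in> Cset d n" using assms(3) by auto
    fix C' assume "E_op d n t C = Some C'"
    then have "left_peak d n C t" "C' = insert (other_mid d n C t) (C - {chain_elem C t})"
      by (auto simp: E_op_def split: if_splits)
    then show "sigma d n C' = sigma d n C \<circ> Transposition.transpose t (Suc t)"
      using swap_sigma[OF dn C t] by (simp add: left_peak_def)
  next
    fix t C assume H: "1 \<le> t \<and> t \<le> r - 1 \<and> C \<in> Cset d n"
    then have t: "1 \<le> t" "Suc t \<le> d * (n - d)" and C: "C \<in> Cset d n" using assms(3) by auto
    fix C' assume "F_op d n t C = Some C'"
    then have "right_peak d n C t" "C' = insert (other_mid d n C t) (C - {chain_elem C t})"
      by (auto simp: F_op_def split: if_splits)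
    then show "sigma d n C' = sigma d n C \<circ> Transposition.transpose t (Suc t)"
      using swap_sigma[OF dn C t] by (simp add: right_peak_def)
  qed
  show ?thesis using part1 part2 by blast
qed


end
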